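(* Let $\lambda=(\lambda_1,\dots,\lambda_r)$ be a partition of $n\ge1$. The Sprague–Grundy value $\mathbb{SG}(\mathcal{L}(\lambda))$ can be computed in $O(\log r)\le O(\log n)$ time units.
   Context: A partition of $n$ is a non-increasing sequence $\lambda_1\ge\dots\ge\lambda_r>0$ of integers with sum $n$, given as input as the list $(\lambda_1,\dots,\lambda_r)$ with random access to its entries; $()$ is the empty partition. For non-negative $i,j$, $\lambda[i,j]$ is $(\lambda_{i+1}-j,\dots,\lambda_r-j)$ with all non-positive entries removed. LCTR: positions $\mathcal{L}(\mu)$; if $\mu\neq()$ the two moves go to $\mathcal{L}(\mu[1,0])$ and $\mathcal{L}(\mu[0,1])$; $\mathcal{L}(())$ is terminal. Normal play; $\mathbb{SG}(A)=\operatorname{mex}\{\mathbb{SG}(B):A\to B\}$. A time unit is any of: reading one integer (entry) of the input, one basic arithmetic operation on integers (addition, subtraction, multiplication or division by 2, parity, comparison), or computing the mex of a set of at most two integers from $\{0,1,2\}$. *)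

theory Defs
  imports Complex_Main
begin

definition is_partition :: "nat \<Rightarrow> nat list \<Rightarrow> bool" where
  "is_partition n lam \<longleftrightarrow> sorted_wrt (\<ge>) lam \<and> (\<forall>x\<in>set lam. 0 < x) \<and> sum_list lam = n"

definition shift :: "nat \<Rightarrow> nat \<Rightarrow> nat list \<Rightarrow> nat list" where
  "shift i j lam = filter (\<lambda>x. 0 < x) (map (\<lambda>x. x - j) (drop i lam))"

definition mex :: "nat set \<Rightarrow> nat" where
  "mex S = (LEAST m. m \<notin> S)"

text \<open>Sprague-Grundy value of the LCTR position L(mu):
  the empty partition is terminal; otherwise the moves go to mu[1,0] and mu[0,1].\<close>
function sg :: "nat list \<Rightarrow> nat" where
  "sg [] = 0"
| "sg (x # xs) = mex {sg (shift 1 0 (x # xs)), sg (shift 0 1 (x # xs))}"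
  by pat_completeness auto
termination
proof (relation "measure (\<lambda>l. sum_list l + length l)")
  show "wf (measure (\<lambda>l. sum_list l + length l))" by simp
next
  fix x :: nat and xs
  show "(shift 1 0 (x # xs), x # xs) \<in> measure (\<lambda>l. sum_list l + length l)"
  proof -
    have "sum_list (filter ((<) 0) l) \<le> sum_list l" for l :: "nat list"
      by (induction l) auto
    moreover have "length (filter ((<) 0) xs) \<le> length xs" by simp
    ultimately have "sum_list (filter ((<) 0) xs) + length (filter ((<) 0) xs) \<le> sum_list xs + length xs"
      by (meson add_mono)
    then show ?thesis by (simp add: shift_def)
  qed
next
  fix x :: nat and xs :: "nat list"
  have key: "sum_list (filter (\<lambda>y. 0 < y) (map (\<lambda>y. y - 1) l)) + length (filter (\<lambda>y. 0 < y) (map (\<lambda>y. y - 1) l))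
             \<le> sum_list l" for l :: "nat list"
    by (induction l) auto
  have "sum_list (filter (\<lambda>y. 0 < y) (map (\<lambda>y. y - 1) (x#xs))) + length (filter (\<lambda>y. 0 < y) (map (\<lambda>y. y - 1) (x#xs)))
        < sum_list (x#xs) + length (x#xs)"
    using key[of "x#xs"] by simp
  then show "(shift 0 1 (x # xs), x # xs) \<in> measure (\<lambda>l. sum_list l + length l)"
    by (simp add: shift_def)
qed

text \<open>Every executed instruction
  costs one time unit. Control flow (jumps, constants, moves)
  is also charged one unit each; since a program is a fixed finite list, this changes
  costs only by a constant factor.\<close>
datatype instr =
    Const nat int
  | Mov nat nat
  | Add nat nat nat
  | Sub nat nat nat
  | Mul nat nat nat
  | Half nat nat
  | Par nat nat
  | Lt nat nat nat
  | Eq nat nat nat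
  | Mex nat nat nat
  | Read nat nat
  | Jmp nat
  | Jz nat nat

type_synonym state = "nat \<times> (nat \<Rightarrow> int)"

definition mex_int :: "int \<Rightarrow> int \<Rightarrow> int" where
  "mex_int a b = int (LEAST m::nat. int m \<noteq> a \<and> int m \<noteq> b)"

fun exec :: "int list \<Rightarrow> instr \<Rightarrow> state \<Rightarrow> state" where
  "exec xs (Const d c) (pc, r) = (Suc pc, r(d := c))"
| "exec xs (Mov d a) (pc, r) = (Suc pc, r(d := r a))"
| "exec xs (Add d a b) (pc, r) = (Suc pc, r(d := r a + r b))"
| "exec xs (Sub d a b) (pc, r) = (Suc pc, r(d := r a - r b))"
| "exec xs (Mul d a b) (pc, r) = (Suc pc, r(d := r a * r b))"
| "exec xs (Half d a) (pc, r) = (Suc pc, r(d := r a div 2))"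
| "exec xs (Par d a) (pc, r) = (Suc pc, r(d := r a mod 2))"
| "exec xs (Lt d a b) (pc, r) = (Suc pc, r(d := (if r a < r b then 1 else 0)))"
| "exec xs (Eq d a b) (pc, r) = (Suc pc, r(d := (if r a = r b then 1 else 0)))"
| "exec xs (Mex d a b) (pc, r) = (Suc pc, r(d := mex_int (r a) (r b)))"
| "exec xs (Read d a) (pc, r) =
     (Suc pc, r(d := (if 0 \<le> r a \<and> r a < int (length xs) then xs ! nat (r a) else 0)))"
| "exec xs (Jmp t) (pc, r) = (t, r)"
| "exec xs (Jz a t) (pc, r) = (if r a = 0 then t else Suc pc, r)"

definition halted :: "instr list \<Rightarrow> state \<Rightarrow> bool" where
  "halted p s \<longleftrightarrow> length p \<le> fst s"

definition step :: "instr list \<Rightarrow> int list \<Rightarrow> state \<Rightarrow> state" where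
  "step p xs s = (if halted p s then s else exec xs (p ! fst s) s)"

definition init :: "int list \<Rightarrow> state" where
  "init xs = (0, (\<lambda>_. 0)(0 := int (length xs)))"

definition runs_within :: "instr list \<Rightarrow> int list \<Rightarrow> nat \<Rightarrow> int \<Rightarrow> bool" where
  "runs_within p xs T v \<longleftrightarrow>
     (\<exists>k\<le>T. halted p ((step p xs ^^ k) (init xs)) \<and> snd ((step p xs ^^ k) (init xs)) 0 = v)"

end

theory Submission
  imports Defs
begin
definition mex2 :: "nat \<Rightarrow> nat \<Rightarrow> nat" where
  "mex2 a b = (if a \<noteq> 0 \<and> b \<noteq> 0 then 0 else if a \<noteq> 1 \<and> b \<noteq> 1 then 1 else 2)"

lemma mex2_tab[simp]: "mex2 0 0 = 1" "mex2 0 1 = 2" "mex2 0 2 = 1" "mex2 1 0 = 2" "mex2 1 1 = 0" "mex2 1 2 = 0"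
  "mex2 2 0 = 1" "mex2 2 1 = 0" "mex2 2 2 = 0" by (simp_all add: mex2_def)
lemma mex2_tab'[simp]: "mex2 0 (Suc 0) = 2" "mex2 (Suc 0) 0 = 2" "mex2 (Suc 0) (Suc 0) = 0" "mex2 (Suc 0) 2 = 0"
  "mex2 2 (Suc 0) = 0" "mex2 0 0 = Suc 0" "mex2 0 2 = Suc 0" "mex2 2 0 = Suc 0" by (simp_all add: mex2_def)

lemma mex2_le: "mex2 a b \<le> 2" by (simp add: mex2_def)
lemma mex2_comm: "mex2 a b = mex2 b a" by (simp add: mex2_def)
lemma mex2_neq1: "mex2 a b \<noteq> a" by (simp add: mex2_def)
lemma mex2_neq2: "mex2 a b \<noteq> b" by (simp add: mex2_def)

lemma mex_pair: "mex {a,b} = mex2 a b"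
  unfolding mex_def
proof (rule Least_equality)
  show "mex2 a b \<notin> {a, b}" using mex2_neq1 mex2_neq2 by auto
next
  fix y assume "y \<notin> {a,b}"
  then show "mex2 a b \<le> y" unfolding mex2_def by auto
qed

lemma mex_int_eq: "mex_int (int a) (int b) = int (mex2 a b)"
  unfolding mex_int_def
proof -
  have "(LEAST m::nat. int m \<noteq> int a \<and> int m \<noteq> int b) = mex2 a b"
  proof (rule Least_equality)
    show "int (mex2 a b) \<noteq> int a \<and> int (mex2 a b) \<noteq> int b" using mex2_neq1 mex2_neq2 by auto
  next
    fix y :: nat assume "int y \<noteq> int a \<and> int y \<noteq> int b"
    then show "mex2 a b \<le> y" unfolding mex2_def by auto
  qed
  then show "int (LEAST m::nat. int m \<noteq> int a \<and> int m \<noteq> int b) = int (mex2 a b)" by simp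
qed

definition ent :: "nat list \<Rightarrow> nat \<Rightarrow> nat" where
  "ent l i = (if i < length l then l ! i else 0)"

definition G :: "nat list \<Rightarrow> nat \<Rightarrow> nat \<Rightarrow> nat" where
  "G l i j = sg (shift i j l)"

lemma sorted_hd_ge: "sorted_wrt (\<ge>) (y # ys) \<Longrightarrow> x \<in> set ys \<Longrightarrow> x \<le> y" by auto

lemma shift_cons:
  assumes "i < length l"
  shows "shift i j l = (if j < l ! i then (l ! i - j) # shift (Suc i) j l else shift (Suc i) j l)"
proof -
  have "drop i l = l ! i # drop (Suc i) l" using assms by (simp add: Cons_nth_drop_Suc)
  then show ?thesis unfolding shift_def by auto
qed

lemma shift_empty_big: "length l \<le> i \<Longrightarrow> shift i j l = []"
  unfolding shift_def by simp

lemma shift_nil_if: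
  assumes s: "sorted_wrt (\<ge>) l" and "i < length l" and "\<not> j < l ! i"
  shows "shift i j l = []"
proof -
  have d: "drop i l = l ! i # drop (Suc i) l" using assms by (simp add: Cons_nth_drop_Suc)
  have "sorted_wrt (\<ge>) (drop i l)" using s by (simp add: sorted_wrt_drop)
  then have "\<forall>x\<in>set (drop (Suc i) l). x \<le> l ! i" using d by simp
  then show ?thesis using assms(3) d unfolding shift_def by (auto simp: filter_empty_conv)
qed

lemma filter_map_minus1:
  "filter (\<lambda>x. 0 < x) (map (\<lambda>x. x - 1) (filter (\<lambda>x. 0 < x) ys)) = filter (\<lambda>x. 0 < x) (map (\<lambda>x. x - (1::nat)) ys)"
  by (induction ys) auto

lemma shift01: "shift 0 1 (shift i j l) = shift i (Suc j) l"
proof -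
  have "shift 0 1 (shift i j l) = filter (\<lambda>x. 0 < x) (map (\<lambda>x. x - 1) (map (\<lambda>x. x - j) (drop i l)))"
    unfolding shift_def by (simp only: drop_0 filter_map_minus1)
  also have "map (\<lambda>x. x - 1) (map (\<lambda>x. x - j) (drop i l)) = map (\<lambda>x. x - Suc j) (drop i l)" by simp
  finally show ?thesis unfolding shift_def by simp
qed

lemma filter_pos_idem: "filter (\<lambda>x. 0 < x) (filter (\<lambda>x. 0 < (x::nat)) ys) = filter (\<lambda>x. 0 < x) ys"
  by (induction ys) auto

lemma shift10:
  assumes "i < length l" "j < l ! i"
  shows "shift 1 0 (shift i j l) = shift (Suc i) j l"
proof -
  have "shift i j l = (l ! i - j) # shift (Suc i) j l" using shift_cons[OF assms(1)] assms(2) by simp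
  then show ?thesis unfolding shift_def by (simp add: filter_pos_idem)
qed

lemma G_rec:
  assumes s: "sorted_wrt (\<ge>) l"
  shows "G l i j = (if j < ent l i then mex2 (G l (Suc i) j) (G l i (Suc j)) else 0)"
proof (cases "j < ent l i")
  case True
  then have il: "i < length l" and jl: "j < l ! i" by (auto simp: ent_def split: if_splits)
  have e: "shift i j l = (l ! i - j) # shift (Suc i) j l" using shift_cons[OF il] jl by simp
  have "G l i j = mex {sg (shift 1 0 (shift i j l)), sg (shift 0 1 (shift i j l))}"
    unfolding G_def by (simp only: e sg.simps(2))
  also have "\<dots> = mex2 (G l (Suc i) j) (G l i (Suc j))"
    by (simp only: mex_pair shift10[OF il jl] shift01 G_def)
  finally show ?thesis using True by simp
next
  case False
  then have "shift i j l = []"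
    using shift_nil_if[OF s] shift_empty_big by (cases "i < length l") (auto simp: ent_def)
  then show ?thesis using False by (simp add: G_def)
qed

lemma G_le: "sorted_wrt (\<ge>) l \<Longrightarrow> G l i j \<le> 2"
  by (subst G_rec) (auto simp: mex2_le)

lemma ent_mono:
  assumes s: "sorted_wrt (\<ge>) l" and "i \<le> i'"
  shows "ent l i' \<le> ent l i"
  using assms unfolding ent_def
  by (auto simp: sorted_wrt_iff_nth_less le_less)

definition b3 :: "nat \<Rightarrow> nat \<Rightarrow> nat \<Rightarrow> nat \<Rightarrow> nat \<Rightarrow> nat \<Rightarrow> nat \<Rightarrow> bool" where
 "b3 x0 x1 x2 x3 y0 y1 y2 = (let
   c22 = mex2 x2 y2; c21 = mex2 x1 c22; c20 = mex2 x0 c21;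
   c12 = mex2 c22 y1; c11 = mex2 c21 c12; c10 = mex2 c20 c11;
   c02 = mex2 c12 y0; c01 = mex2 c11 c02; c00 = mex2 c10 c01
   in c00 = c11)"

lemma b3_all: "\<forall>x3\<in>{0,1,2}. \<forall>x2\<in>{0,1,2}. x2 \<noteq> x3 \<longrightarrow> (\<forall>x1\<in>{0,1,2}. x1 \<noteq> x2 \<longrightarrow> (\<forall>x0\<in>{0,1,2}. x0 \<noteq> x1 \<longrightarrow>
  (\<forall>y2\<in>{0,1,2}. y2 \<noteq> x3 \<longrightarrow> (\<forall>y1\<in>{0,1,2}. y1 \<noteq> y2 \<longrightarrow> (\<forall>y0\<in>{0,1,2}. y0 \<noteq> y1 \<longrightarrow>
   b3 x0 x1 x2 x3 y0 y1 y2)))))"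
  by (simp add: b3_def Let_def)

lemma b3_rule:
  assumes "x0 \<in> {0,1,2}" "x1 \<in> {0,1,2}" "x2 \<in> {0,1,2}" "x3 \<in> {0,1,2}" "y0 \<in> {0,1,2}" "y1 \<in> {0,1,2}" "y2 \<in> {0,1,2}"
   "x2 \<noteq> x3" "x1 \<noteq> x2" "x0 \<noteq> x1" "y2 \<noteq> x3" "y1 \<noteq> y2" "y0 \<noteq> y1"
  shows "b3 x0 x1 x2 x3 y0 y1 y2"
  using assms by (intro b3_all[rule_format]) auto

lemma le2_cases: "(x::nat) \<le> 2 \<Longrightarrow> x \<in> {0,1,2}" by auto

lemma diag4:
  fixes f :: "nat \<Rightarrow> nat \<Rightarrow> nat"
  assumes rec: "\<And>i j. i < 4 \<Longrightarrow> j < 4 \<Longrightarrow> f i j = mex2 (f (Suc i) j) (f i (Suc j))"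
  shows "f 0 0 = f 1 1"
proof -
  have r: "\<And>i j. i < 4 \<Longrightarrow> j < 4 \<Longrightarrow> f i j \<le> 2" using rec mex2_le by metis
  have n1: "\<And>i j. i < 4 \<Longrightarrow> j < 4 \<Longrightarrow> f i j \<noteq> f i (Suc j)" using rec mex2_neq2 by metis
  have n2: "\<And>i j. i < 4 \<Longrightarrow> j < 4 \<Longrightarrow> f i j \<noteq> f (Suc i) j" using rec mex2_neq1 by metis
  have "b3 (f 3 0) (f 3 1) (f 3 2) (f 3 3) (f 0 3) (f 1 3) (f 2 3)"
  proof (rule b3_rule)
    show "f 3 0 \<in> {0,1,2}" "f 3 1 \<in> {0,1,2}" "f 3 2 \<in> {0,1,2}" "f 3 3 \<in> {0,1,2}"
      "f 0 3 \<in> {0,1,2}" "f 1 3 \<in> {0,1,2}" "f 2 3 \<in> {0,1,2}"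
      by (intro le2_cases r; simp)+
    show "f 3 2 \<noteq> f 3 3" "f 3 1 \<noteq> f 3 2" "f 3 0 \<noteq> f 3 1" using n1[of 3 0] n1[of 3 1] n1[of 3 2]
      by (simp_all add: numeral_eq_Suc)
    show "f 2 3 \<noteq> f 3 3" "f 1 3 \<noteq> f 2 3" "f 0 3 \<noteq> f 1 3" using n2[of 2 3] n2[of 1 3] n2[of 0 3]
      by (simp_all add: numeral_eq_Suc)
  qed
  moreover have "f 0 0 = f 1 1 \<longleftrightarrow> b3 (f 3 0) (f 3 1) (f 3 2) (f 3 3) (f 0 3) (f 1 3) (f 2 3)"
  proof -
    have e: "f 0 0 = mex2 (f 1 0) (f 0 1)" "f 0 1 = mex2 (f 1 1) (f 0 2)" "f 0 2 = mex2 (f 1 2) (f 0 3)"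
      "f 1 0 = mex2 (f 2 0) (f 1 1)" "f 1 1 = mex2 (f 2 1) (f 1 2)" "f 1 2 = mex2 (f 2 2) (f 1 3)"
      "f 2 0 = mex2 (f 3 0) (f 2 1)" "f 2 1 = mex2 (f 3 1) (f 2 2)" "f 2 2 = mex2 (f 3 2) (f 2 3)"
      using rec[of 0 0] rec[of 0 1] rec[of 0 2] rec[of 1 0] rec[of 1 1] rec[of 1 2] rec[of 2 0] rec[of 2 1] rec[of 2 2]
      by (simp_all add: numeral_eq_Suc)
    show ?thesis unfolding b3_def Let_def by (simp only: e)
  qed
  ultimately show ?thesis by simp
qed

lemma G_diag:
  assumes s: "sorted_wrt (\<ge>) l" and ins: "j + 3 < ent l (i + 3)"
  shows "G l i j = G l (Suc i) (Suc j)"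
proof -
  have "(\<lambda>a b. G l (i+a) (j+b)) 0 0 = (\<lambda>a b. G l (i+a) (j+b)) 1 1"
  proof (rule diag4[of "\<lambda>a b. G l (i+a) (j+b)"])
    fix a b :: nat assume ab: "a < 4" "b < 4"
    have "ent l (i+3) \<le> ent l (i+a)" using ent_mono[OF s] ab by simp
    then have "j + b < ent l (i+a)" using ins ab by simp
    then show "G l (i+a) (j+b) = mex2 (G l (i + Suc a) (j+b)) (G l (i+a) (j + Suc b))"
      using G_rec[OF s, of "i+a" "j+b"] by simp
  qed
  then show ?thesis by simp
qed

lemma G_diag_iter:
  assumes s: "sorted_wrt (\<ge>) l" and ins: "\<And>k. k < m \<Longrightarrow> k + 3 < ent l (k + 3)"
  shows "G l 0 0 = G l m m"
  using ins
proof (induction m)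
  case 0 then show ?case by simp
next
  case (Suc m)
  then have "G l 0 0 = G l m m" by simp
  also have "\<dots> = G l (Suc m) (Suc m)" using G_diag[OF s] Suc.prems[of m] by simp
  finally show ?case .
qed

type_synonym tri = "nat \<times> nat \<times> nat"

definition Fm :: "nat \<Rightarrow> tri \<Rightarrow> tri" where
 "Fm k t = (case t of (x0,x1,x2) \<Rightarrow>
    let y2 = (if 3 \<le> k then mex2 x2 0 else 0); y1 = (if 2 \<le> k then mex2 x1 y2 else 0);
        y0 = (if 1 \<le> k then mex2 x0 y1 else 0) in (y0,y1,y2))"

definition armW :: "nat \<Rightarrow> nat \<Rightarrow> nat \<Rightarrow> tri" where
 "armW e0 e1 e2 = (Fm 3 ^^ (e2-3)) ((Fm 2 ^^ ((e1-3)-(e2-3))) ((Fm 1 ^^ ((e0-3)-(e1-3))) (0,0,0)))"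

lemma strip:
  fixes f :: "nat \<Rightarrow> nat \<Rightarrow> nat" and e :: "nat \<Rightarrow> nat"
  assumes rec: "\<And>i j. 3 \<le> i \<Longrightarrow> j < 3 \<Longrightarrow> f i j = (if i < e j then mex2 (f (Suc i) j) (f i (Suc j)) else 0)"
   and z: "\<And>i. 3 \<le> i \<Longrightarrow> f i 3 = 0"
   and e10: "e 1 \<le> e 0" and e21: "e 2 \<le> e 1"
  shows "(f 3 0, f 3 1, f 3 2) = armW (e 0) (e 1) (e 2)"
proof -
  define T where "T i = (f i 0, f i 1, f i 2)" for i
  define lvl where "lvl i = (if i < e 2 then 3 else if i < e 1 then 2 else if i < e 0 then 1 else (0::nat))" for i
  have stp: "T i = Fm (lvl i) (T (Suc i))" if "3 \<le> i" for i
  proof -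
    have r0: "f i 0 = (if i < e 0 then mex2 (f (Suc i) 0) (f i 1) else 0)" using rec[OF that, of 0] by simp
    have r1: "f i 1 = (if i < e 1 then mex2 (f (Suc i) 1) (f i 2) else 0)" using rec[OF that, of 1] by (simp add: numeral_eq_Suc)
    have r2: "f i 2 = (if i < e 2 then mex2 (f (Suc i) 2) 0 else 0)" using rec[OF that, of 2] z[OF that] by (simp add: numeral_eq_Suc)
    show ?thesis unfolding T_def lvl_def Fm_def Let_def using e10 e21 r0 r1 r2 by auto
  qed
  have itr: "T s = (Fm k ^^ n) (T (s+n))" if "3 \<le> s" "\<And>i. s \<le> i \<Longrightarrow> i < s + n \<Longrightarrow> lvl i = k" for s n k
    using that
  proof (induction n arbitrary: s)
    case 0 then show ?case by simp
  next
    case (Suc n)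
    have "T s = Fm k (T (Suc s))" using stp[OF Suc.prems(1)] Suc.prems(2)[of s] by simp
    also have "T (Suc s) = (Fm k ^^ n) (T (Suc s + n))"
      using Suc.IH[of "Suc s"] Suc.prems by simp
    finally show ?case by simp
  qed
  have zero: "T i = (0,0,0)" if "3 \<le> i" "e 0 \<le> i" for i
    using rec[OF that(1), of 0] rec[OF that(1), of 1] rec[OF that(1), of 2] that e10 e21 unfolding T_def
    by (simp add: numeral_eq_Suc)
  define s3 where "s3 = 3 + (e 2 - 3)"
  define s2 where "s2 = 3 + (e 1 - 3)"
  define s1 where "s1 = 3 + (e 0 - 3)"
  have "T 3 = (Fm 3 ^^ (e 2 - 3)) (T (3 + (e 2 - 3)))"
    by (rule itr) (auto simp: lvl_def)
  also have "T (3 + (e 2 - 3)) = (Fm 2 ^^ ((e 1 - 3) - (e 2 - 3))) (T (3 + (e 1 - 3)))"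
  proof -
    have "T s3 = (Fm 2 ^^ ((e 1 - 3) - (e 2 - 3))) (T (s3 + ((e 1 - 3) - (e 2 - 3))))"
      by (rule itr) (use e21 in \<open>auto simp: lvl_def s3_def\<close>)
    moreover have "s3 + ((e 1 - 3) - (e 2 - 3)) = 3 + (e 1 - 3)" unfolding s3_def using e21 by simp
    ultimately show ?thesis unfolding s3_def by metis
  qed
  also have "T (3 + (e 1 - 3)) = (Fm 1 ^^ ((e 0 - 3) - (e 1 - 3))) (T (3 + (e 0 - 3)))"
  proof -
    have "T s2 = (Fm 1 ^^ ((e 0 - 3) - (e 1 - 3))) (T (s2 + ((e 0 - 3) - (e 1 - 3))))"
      by (rule itr) (use e21 e10 in \<open>auto simp: lvl_def s2_def\<close>)
    moreover have "s2 + ((e 0 - 3) - (e 1 - 3)) = 3 + (e 0 - 3)" unfolding s2_def using e10 by simp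
    ultimately show ?thesis unfolding s2_def by metis
  qed
  also have "T (3 + (e 0 - 3)) = (0,0,0)" using zero[of "3 + (e 0 - 3)"] by simp
  finally show ?thesis unfolding armW_def T_def by simp
qed

definition core :: "nat \<Rightarrow> nat \<Rightarrow> nat \<Rightarrow> tri \<Rightarrow> tri \<Rightarrow> nat" where
 "core a0 a1 a2 w v = (case w of (w0,w1,w2) \<Rightarrow> case v of (v0,v1,v2) \<Rightarrow> let
   c22 = (if 2 < a2 then mex2 v2 w2 else 0); c21 = (if 1 < a2 then mex2 v1 c22 else 0);
   c20 = (if 0 < a2 then mex2 v0 c21 else 0);
   c12 = (if 2 < a1 then mex2 c22 w1 else 0); c11 = (if 1 < a1 then mex2 c21 c12 else 0);
   c10 = (if 0 < a1 then mex2 c20 c11 else 0);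
   c02 = (if 2 < a0 then mex2 c12 w0 else 0); c01 = (if 1 < a0 then mex2 c11 c02 else 0);
   c00 = (if 0 < a0 then mex2 c10 c01 else 0) in c00)"

theorem grid:
  fixes g :: "nat \<Rightarrow> nat \<Rightarrow> nat" and a c :: "nat \<Rightarrow> nat"
  assumes rec: "\<And>i j. g i j = (if j < a i then mex2 (g (Suc i) j) (g i (Suc j)) else 0)"
   and adec: "\<And>i. a (Suc i) \<le> a i" and a3: "a 3 \<le> 3"
   and cc: "\<And>i k. k < 3 \<Longrightarrow> (k < a i \<longleftrightarrow> i < c k)"
  shows "g 0 0 = core (a 0) (a 1) (a 2) (armW (a 0) (a 1) (a 2)) (armW (c 0) (c 1) (c 2))"
proof -
  have amono: "a j \<le> a i" if "i \<le> j" for i j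
    using that by (induction j) (auto simp: le_Suc_eq intro: order_trans[OF adec])
  have W: "(g 0 3, g 1 3, g 2 3) = armW (a 0) (a 1) (a 2)"
  proof -
    have "((\<lambda>i j. g j i) 3 0, (\<lambda>i j. g j i) 3 1, (\<lambda>i j. g j i) 3 2) = armW (a 0) (a 1) (a 2)"
    proof (rule strip[of "\<lambda>i j. g j i" a])
      fix i j :: nat assume "3 \<le> i" "j < 3"
      show "g j i = (if i < a j then mex2 (g j (Suc i)) (g (Suc j) i) else 0)"
        using rec[of j i] by (simp add: mex2_comm)
    next
      fix i :: nat assume "3 \<le> i"
      then show "g 3 i = 0" using rec[of 3 i] a3 by simp
    next
      show "a 1 \<le> a 0" "a 2 \<le> a 1" using adec[of 0] adec[of 1] by (simp_all add: numeral_eq_Suc)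
    qed
    then show ?thesis by simp
  qed
  have c10: "c 1 \<le> c 0"
  proof (rule ccontr)
    assume "\<not> c 1 \<le> c 0"
    then have "c 0 < c 1" by simp
    then have "1 < a (c 0)" using cc[of 1 "c 0"] by simp
    then have "c 0 < c 0" using cc[of 0 "c 0"] by simp
    then show False by simp
  qed
  have c21: "c 2 \<le> c 1"
  proof (rule ccontr)
    assume "\<not> c 2 \<le> c 1"
    then have "c 1 < c 2" by simp
    then have "2 < a (c 1)" using cc[of 2 "c 1"] by simp
    then have "c 1 < c 1" using cc[of 1 "c 1"] by simp
    then show False by simp
  qed
  have V: "(g 3 0, g 3 1, g 3 2) = armW (c 0) (c 1) (c 2)"
  proof (rule strip[of g c])
    fix i j :: nat assume i: "3 \<le> i" and j: "j < 3"
    show "g i j = (if i < c j then mex2 (g (Suc i) j) (g i (Suc j)) else 0)"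
      using rec[of i j] cc[OF j, of i] by simp
  next
    fix i :: nat assume "3 \<le> i"
    then have "a i \<le> 3" using amono[of 3 i] a3 by simp
    then show "g i 3 = 0" using rec[of i 3] by simp
  qed (use c10 c21 in auto)
  have e: "g 0 0 = (if 0 < a 0 then mex2 (g 1 0) (g 0 1) else 0)"
    "g 0 1 = (if 1 < a 0 then mex2 (g 1 1) (g 0 2) else 0)"
    "g 0 2 = (if 2 < a 0 then mex2 (g 1 2) (g 0 3) else 0)"
    "g 1 0 = (if 0 < a 1 then mex2 (g 2 0) (g 1 1) else 0)"
    "g 1 1 = (if 1 < a 1 then mex2 (g 2 1) (g 1 2) else 0)"
    "g 1 2 = (if 2 < a 1 then mex2 (g 2 2) (g 1 3) else 0)"
    "g 2 0 = (if 0 < a 2 then mex2 (g 3 0) (g 2 1) else 0)"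
    "g 2 1 = (if 1 < a 2 then mex2 (g 3 1) (g 2 2) else 0)"
    "g 2 2 = (if 2 < a 2 then mex2 (g 3 2) (g 2 3) else 0)"
    using rec[of 0 0] rec[of 0 1] rec[of 0 2] rec[of 1 0] rec[of 1 1] rec[of 1 2] rec[of 2 0] rec[of 2 1] rec[of 2 2]
    by (simp_all add: numeral_eq_Suc)
  show ?thesis unfolding W[symmetric] V[symmetric] core_def Let_def prod.case
    by (simp only: e)
qed

definition bnd :: "tri \<Rightarrow> bool" where
  "bnd t \<longleftrightarrow> fst t \<le> 2 \<and> fst (snd t) \<le> 2 \<and> snd (snd t) \<le> 2"

lemma Fm_bnd: "bnd (Fm k t)"
  unfolding bnd_def Fm_def Let_def by (auto split: prod.splits simp: mex2_le)

lemma Fm_inst: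
  "Fm 1 (Fm 1 (Fm 1 (Fm 1 (Fm 1 (0,0,0))))) = Fm 1 (Fm 1 (Fm 1 (0,0,0)))"
  "Fm 1 (Fm 1 (Fm 1 (Fm 1 (Fm 1 (0,0,1))))) = Fm 1 (Fm 1 (Fm 1 (0,0,1)))"
  "Fm 1 (Fm 1 (Fm 1 (Fm 1 (Fm 1 (0,0,2))))) = Fm 1 (Fm 1 (Fm 1 (0,0,2)))"
  "Fm 1 (Fm 1 (Fm 1 (Fm 1 (Fm 1 (0,1,0))))) = Fm 1 (Fm 1 (Fm 1 (0,1,0)))"
  "Fm 1 (Fm 1 (Fm 1 (Fm 1 (Fm 1 (0,1,1))))) = Fm 1 (Fm 1 (Fm 1 (0,1,1)))"
  "Fm 1 (Fm 1 (Fm 1 (Fm 1 (Fm 1 (0,1,2))))) = Fm 1 (Fm 1 (Fm 1 (0,1,2)))"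
  "Fm 1 (Fm 1 (Fm 1 (Fm 1 (Fm 1 (0,2,0))))) = Fm 1 (Fm 1 (Fm 1 (0,2,0)))"
  "Fm 1 (Fm 1 (Fm 1 (Fm 1 (Fm 1 (0,2,1))))) = Fm 1 (Fm 1 (Fm 1 (0,2,1)))"
  "Fm 1 (Fm 1 (Fm 1 (Fm 1 (Fm 1 (0,2,2))))) = Fm 1 (Fm 1 (Fm 1 (0,2,2)))"
  "Fm 1 (Fm 1 (Fm 1 (Fm 1 (Fm 1 (1,0,0))))) = Fm 1 (Fm 1 (Fm 1 (1,0,0)))"
  "Fm 1 (Fm 1 (Fm 1 (Fm 1 (Fm 1 (1,0,1))))) = Fm 1 (Fm 1 (Fm 1 (1,0,1)))"
  "Fm 1 (Fm 1 (Fm 1 (Fm 1 (Fm 1 (1,0,2))))) = Fm 1 (Fm 1 (Fm 1 (1,0,2)))"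
  "Fm 1 (Fm 1 (Fm 1 (Fm 1 (Fm 1 (1,1,0))))) = Fm 1 (Fm 1 (Fm 1 (1,1,0)))"
  "Fm 1 (Fm 1 (Fm 1 (Fm 1 (Fm 1 (1,1,1))))) = Fm 1 (Fm 1 (Fm 1 (1,1,1)))"
  "Fm 1 (Fm 1 (Fm 1 (Fm 1 (Fm 1 (1,1,2))))) = Fm 1 (Fm 1 (Fm 1 (1,1,2)))"
  "Fm 1 (Fm 1 (Fm 1 (Fm 1 (Fm 1 (1,2,0))))) = Fm 1 (Fm 1 (Fm 1 (1,2,0)))"
  "Fm 1 (Fm 1 (Fm 1 (Fm 1 (Fm 1 (1,2,1))))) = Fm 1 (Fm 1 (Fm 1 (1,2,1)))"
  "Fm 1 (Fm 1 (Fm 1 (Fm 1 (Fm 1 (1,2,2))))) = Fm 1 (Fm 1 (Fm 1 (1,2,2)))"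
  "Fm 1 (Fm 1 (Fm 1 (Fm 1 (Fm 1 (2,0,0))))) = Fm 1 (Fm 1 (Fm 1 (2,0,0)))"
  "Fm 1 (Fm 1 (Fm 1 (Fm 1 (Fm 1 (2,0,1))))) = Fm 1 (Fm 1 (Fm 1 (2,0,1)))"
  "Fm 1 (Fm 1 (Fm 1 (Fm 1 (Fm 1 (2,0,2))))) = Fm 1 (Fm 1 (Fm 1 (2,0,2)))"
  "Fm 1 (Fm 1 (Fm 1 (Fm 1 (Fm 1 (2,1,0))))) = Fm 1 (Fm 1 (Fm 1 (2,1,0)))"
  "Fm 1 (Fm 1 (Fm 1 (Fm 1 (Fm 1 (2,1,1))))) = Fm 1 (Fm 1 (Fm 1 (2,1,1)))"
  "Fm 1 (Fm 1 (Fm 1 (Fm 1 (Fm 1 (2,1,2))))) = Fm 1 (Fm 1 (Fm 1 (2,1,2)))"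
  "Fm 1 (Fm 1 (Fm 1 (Fm 1 (Fm 1 (2,2,0))))) = Fm 1 (Fm 1 (Fm 1 (2,2,0)))"
  "Fm 1 (Fm 1 (Fm 1 (Fm 1 (Fm 1 (2,2,1))))) = Fm 1 (Fm 1 (Fm 1 (2,2,1)))"
  "Fm 1 (Fm 1 (Fm 1 (Fm 1 (Fm 1 (2,2,2))))) = Fm 1 (Fm 1 (Fm 1 (2,2,2)))"
  "Fm 2 (Fm 2 (Fm 2 (Fm 2 (Fm 2 (0,0,0))))) = Fm 2 (Fm 2 (Fm 2 (0,0,0)))"
  "Fm 2 (Fm 2 (Fm 2 (Fm 2 (Fm 2 (0,0,1))))) = Fm 2 (Fm 2 (Fm 2 (0,0,1)))"
  "Fm 2 (Fm 2 (Fm 2 (Fm 2 (Fm 2 (0,0,2))))) = Fm 2 (Fm 2 (Fm 2 (0,0,2)))"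
  "Fm 2 (Fm 2 (Fm 2 (Fm 2 (Fm 2 (0,1,0))))) = Fm 2 (Fm 2 (Fm 2 (0,1,0)))"
  "Fm 2 (Fm 2 (Fm 2 (Fm 2 (Fm 2 (0,1,1))))) = Fm 2 (Fm 2 (Fm 2 (0,1,1)))"
  "Fm 2 (Fm 2 (Fm 2 (Fm 2 (Fm 2 (0,1,2))))) = Fm 2 (Fm 2 (Fm 2 (0,1,2)))"
  "Fm 2 (Fm 2 (Fm 2 (Fm 2 (Fm 2 (0,2,0))))) = Fm 2 (Fm 2 (Fm 2 (0,2,0)))"
  "Fm 2 (Fm 2 (Fm 2 (Fm 2 (Fm 2 (0,2,1))))) = Fm 2 (Fm 2 (Fm 2 (0,2,1)))"
  "Fm 2 (Fm 2 (Fm 2 (Fm 2 (Fm 2 (0,2,2))))) = Fm 2 (Fm 2 (Fm 2 (0,2,2)))"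
  "Fm 2 (Fm 2 (Fm 2 (Fm 2 (Fm 2 (1,0,0))))) = Fm 2 (Fm 2 (Fm 2 (1,0,0)))"
  "Fm 2 (Fm 2 (Fm 2 (Fm 2 (Fm 2 (1,0,1))))) = Fm 2 (Fm 2 (Fm 2 (1,0,1)))"
  "Fm 2 (Fm 2 (Fm 2 (Fm 2 (Fm 2 (1,0,2))))) = Fm 2 (Fm 2 (Fm 2 (1,0,2)))"
  "Fm 2 (Fm 2 (Fm 2 (Fm 2 (Fm 2 (1,1,0))))) = Fm 2 (Fm 2 (Fm 2 (1,1,0)))"
  "Fm 2 (Fm 2 (Fm 2 (Fm 2 (Fm 2 (1,1,1))))) = Fm 2 (Fm 2 (Fm 2 (1,1,1)))"
  "Fm 2 (Fm 2 (Fm 2 (Fm 2 (Fm 2 (1,1,2))))) = Fm 2 (Fm 2 (Fm 2 (1,1,2)))"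
  "Fm 2 (Fm 2 (Fm 2 (Fm 2 (Fm 2 (1,2,0))))) = Fm 2 (Fm 2 (Fm 2 (1,2,0)))"
  "Fm 2 (Fm 2 (Fm 2 (Fm 2 (Fm 2 (1,2,1))))) = Fm 2 (Fm 2 (Fm 2 (1,2,1)))"
  "Fm 2 (Fm 2 (Fm 2 (Fm 2 (Fm 2 (1,2,2))))) = Fm 2 (Fm 2 (Fm 2 (1,2,2)))"
  "Fm 2 (Fm 2 (Fm 2 (Fm 2 (Fm 2 (2,0,0))))) = Fm 2 (Fm 2 (Fm 2 (2,0,0)))"
  "Fm 2 (Fm 2 (Fm 2 (Fm 2 (Fm 2 (2,0,1))))) = Fm 2 (Fm 2 (Fm 2 (2,0,1)))"
  "Fm 2 (Fm 2 (Fm 2 (Fm 2 (Fm 2 (2,0,2))))) = Fm 2 (Fm 2 (Fm 2 (2,0,2)))"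
  "Fm 2 (Fm 2 (Fm 2 (Fm 2 (Fm 2 (2,1,0))))) = Fm 2 (Fm 2 (Fm 2 (2,1,0)))"
  "Fm 2 (Fm 2 (Fm 2 (Fm 2 (Fm 2 (2,1,1))))) = Fm 2 (Fm 2 (Fm 2 (2,1,1)))"
  "Fm 2 (Fm 2 (Fm 2 (Fm 2 (Fm 2 (2,1,2))))) = Fm 2 (Fm 2 (Fm 2 (2,1,2)))"
  "Fm 2 (Fm 2 (Fm 2 (Fm 2 (Fm 2 (2,2,0))))) = Fm 2 (Fm 2 (Fm 2 (2,2,0)))"
  "Fm 2 (Fm 2 (Fm 2 (Fm 2 (Fm 2 (2,2,1))))) = Fm 2 (Fm 2 (Fm 2 (2,2,1)))"
  "Fm 2 (Fm 2 (Fm 2 (Fm 2 (Fm 2 (2,2,2))))) = Fm 2 (Fm 2 (Fm 2 (2,2,2)))"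
  "Fm 3 (Fm 3 (Fm 3 (Fm 3 (Fm 3 (0,0,0))))) = Fm 3 (Fm 3 (Fm 3 (0,0,0)))"
  "Fm 3 (Fm 3 (Fm 3 (Fm 3 (Fm 3 (0,0,1))))) = Fm 3 (Fm 3 (Fm 3 (0,0,1)))"
  "Fm 3 (Fm 3 (Fm 3 (Fm 3 (Fm 3 (0,0,2))))) = Fm 3 (Fm 3 (Fm 3 (0,0,2)))"
  "Fm 3 (Fm 3 (Fm 3 (Fm 3 (Fm 3 (0,1,0))))) = Fm 3 (Fm 3 (Fm 3 (0,1,0)))"
  "Fm 3 (Fm 3 (Fm 3 (Fm 3 (Fm 3 (0,1,1))))) = Fm 3 (Fm 3 (Fm 3 (0,1,1)))"
  "Fm 3 (Fm 3 (Fm 3 (Fm 3 (Fm 3 (0,1,2))))) = Fm 3 (Fm 3 (Fm 3 (0,1,2)))"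
  "Fm 3 (Fm 3 (Fm 3 (Fm 3 (Fm 3 (0,2,0))))) = Fm 3 (Fm 3 (Fm 3 (0,2,0)))"
  "Fm 3 (Fm 3 (Fm 3 (Fm 3 (Fm 3 (0,2,1))))) = Fm 3 (Fm 3 (Fm 3 (0,2,1)))"
  "Fm 3 (Fm 3 (Fm 3 (Fm 3 (Fm 3 (0,2,2))))) = Fm 3 (Fm 3 (Fm 3 (0,2,2)))"
  "Fm 3 (Fm 3 (Fm 3 (Fm 3 (Fm 3 (1,0,0))))) = Fm 3 (Fm 3 (Fm 3 (1,0,0)))"
  "Fm 3 (Fm 3 (Fm 3 (Fm 3 (Fm 3 (1,0,1))))) = Fm 3 (Fm 3 (Fm 3 (1,0,1)))"
  "Fm 3 (Fm 3 (Fm 3 (Fm 3 (Fm 3 (1,0,2))))) = Fm 3 (Fm 3 (Fm 3 (1,0,2)))"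
  "Fm 3 (Fm 3 (Fm 3 (Fm 3 (Fm 3 (1,1,0))))) = Fm 3 (Fm 3 (Fm 3 (1,1,0)))"
  "Fm 3 (Fm 3 (Fm 3 (Fm 3 (Fm 3 (1,1,1))))) = Fm 3 (Fm 3 (Fm 3 (1,1,1)))"
  "Fm 3 (Fm 3 (Fm 3 (Fm 3 (Fm 3 (1,1,2))))) = Fm 3 (Fm 3 (Fm 3 (1,1,2)))"
  "Fm 3 (Fm 3 (Fm 3 (Fm 3 (Fm 3 (1,2,0))))) = Fm 3 (Fm 3 (Fm 3 (1,2,0)))"
  "Fm 3 (Fm 3 (Fm 3 (Fm 3 (Fm 3 (1,2,1))))) = Fm 3 (Fm 3 (Fm 3 (1,2,1)))"
  "Fm 3 (Fm 3 (Fm 3 (Fm 3 (Fm 3 (1,2,2))))) = Fm 3 (Fm 3 (Fm 3 (1,2,2)))"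
  "Fm 3 (Fm 3 (Fm 3 (Fm 3 (Fm 3 (2,0,0))))) = Fm 3 (Fm 3 (Fm 3 (2,0,0)))"
  "Fm 3 (Fm 3 (Fm 3 (Fm 3 (Fm 3 (2,0,1))))) = Fm 3 (Fm 3 (Fm 3 (2,0,1)))"
  "Fm 3 (Fm 3 (Fm 3 (Fm 3 (Fm 3 (2,0,2))))) = Fm 3 (Fm 3 (Fm 3 (2,0,2)))"
  "Fm 3 (Fm 3 (Fm 3 (Fm 3 (Fm 3 (2,1,0))))) = Fm 3 (Fm 3 (Fm 3 (2,1,0)))"
  "Fm 3 (Fm 3 (Fm 3 (Fm 3 (Fm 3 (2,1,1))))) = Fm 3 (Fm 3 (Fm 3 (2,1,1)))"
  "Fm 3 (Fm 3 (Fm 3 (Fm 3 (Fm 3 (2,1,2))))) = Fm 3 (Fm 3 (Fm 3 (2,1,2)))"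
  "Fm 3 (Fm 3 (Fm 3 (Fm 3 (Fm 3 (2,2,0))))) = Fm 3 (Fm 3 (Fm 3 (2,2,0)))"
  "Fm 3 (Fm 3 (Fm 3 (Fm 3 (Fm 3 (2,2,1))))) = Fm 3 (Fm 3 (Fm 3 (2,2,1)))"
  "Fm 3 (Fm 3 (Fm 3 (Fm 3 (Fm 3 (2,2,2))))) = Fm 3 (Fm 3 (Fm 3 (2,2,2)))"
  by (simp_all add: Fm_def Let_def)

lemma Fm_per:
  assumes "k \<in> {1,2,3}" "bnd t"
  shows "(Fm k ^^ 5) t = (Fm k ^^ 3) t"
proof -
  obtain x0 x1 x2 where t: "t = (x0,x1,x2)" by (cases t) auto
  have "x0 \<in> {0,1,2}" "x1 \<in> {0,1,2}" "x2 \<in> {0,1,2}" using assms(2) unfolding t bnd_def by auto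
  then have "Fm k (Fm k (Fm k (Fm k (Fm k (x0,x1,x2))))) = Fm k (Fm k (Fm k (x0,x1,x2)))"
    using assms(1) Fm_inst by auto
  then show ?thesis unfolding t by (simp add: numeral_eq_Suc)
qed

lemma Fm_pow_bnd: "bnd t \<Longrightarrow> bnd ((Fm k ^^ n) t)"
  by (cases n) (auto simp: Fm_bnd)

definition red :: "nat \<Rightarrow> nat" where
  "red n = (if n \<le> 4 then n else 3 + (n + 1) mod 2)"

lemma Fm_pow_red:
  assumes k: "k \<in> {1,2,3}" and b: "bnd t"
  shows "(Fm k ^^ n) t = (Fm k ^^ red n) t"
proof (induction n rule: less_induct)
  case (less n)
  show ?case
  proof (cases "n \<le> 4")
    case True then show ?thesis by (simp add: red_def)
  next
    case False
    define m where "m = n - 5"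
    have n: "n = m + 5" using False unfolding m_def by simp
    have "(Fm k ^^ n) t = (Fm k ^^ m) ((Fm k ^^ 5) t)" unfolding n by (simp add: funpow_add)
    also have "\<dots> = (Fm k ^^ m) ((Fm k ^^ 3) t)" using Fm_per[OF k b] by simp
    also have "\<dots> = (Fm k ^^ (m+3)) t" by (simp add: funpow_add)
    also have "\<dots> = (Fm k ^^ red (m+3)) t" using less.IH[of "m+3"] n by simp
    also have "red (m+3) = red n" unfolding n red_def by presburger
    finally show ?thesis .
  qed
qed

definition seg :: "instr list \<Rightarrow> nat \<Rightarrow> instr list \<Rightarrow> bool" where
  "seg p b c \<longleftrightarrow> b + length c \<le> length p \<and> (\<forall>i<length c. p ! (b+i) = c ! i)"

fun relI :: "nat \<Rightarrow> instr \<Rightarrow> instr" where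
  "relI b (Jmp t) = Jmp (b+t)"
| "relI b (Jz a t) = Jz a (b+t)"
| "relI b i = i"

definition rel :: "nat \<Rightarrow> instr list \<Rightarrow> instr list" where
  "rel b c = map (relI b) c"

lemma exec_rel: "exec xs (relI b ins) (b + i, r) = (b + fst (exec xs ins (i, r)), snd (exec xs ins (i,r)))"
  by (cases ins) auto

definition atp :: "nat \<Rightarrow> nat \<Rightarrow> nat" where "atp b i = b + i"

lemma step_rel:
  assumes "seg p b (rel b c)" "i < length c"
  shows "step p xs (atp b i, r) = (atp b (fst (exec xs (c!i) (i,r))), snd (exec xs (c!i) (i,r)))"
proof -
  have "p ! (b+i) = relI b (c ! i)" using assms unfolding seg_def rel_def by auto
  moreover have "\<not> halted p (b+i, r)" using assms unfolding seg_def halted_def rel_def by simp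
  ultimately show ?thesis unfolding step_def atp_def by (simp add: exec_rel)
qed

lemma funpow_step: "(f ^^ Suc n) s = (f ^^ n) (f s)"
  by (simp add: funpow_Suc_right del: funpow.simps)

lemma funpow_numeral: "(f ^^ numeral k) s = (f ^^ pred_numeral k) (f s)"
  by (simp add: numeral_eq_Suc funpow_step del: funpow.simps)

lemma funpow_one: "(f ^^ 1) s = f s" for f :: "'a \<Rightarrow> 'a" by simp

definition bsc :: "nat \<Rightarrow> bool \<Rightarrow> instr list" where
  "bsc t s = [Const 2 0, Add 3 0 1,
   Sub 5 3 2, Lt 8 1 5, Jz 8 16,
   Add 4 2 3, Half 4 4, Sub 5 4 1, Read 6 5,
   (if s then Add 7 t 4 else Mov 7 t),
   Lt 8 6 7, Jz 8 14, Mov 3 4, Jmp 2, Mov 2 4, Jmp 2]"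

definition bsP :: "int list \<Rightarrow> int \<Rightarrow> bool \<Rightarrow> nat \<Rightarrow> bool" where
  "bsP xs T0 s i \<longleftrightarrow> i = 0 \<or> (i \<le> length xs \<and> T0 + (if s then int i else 0) \<le> xs ! (i - 1))"

definition bsinv :: "int list \<Rightarrow> nat \<Rightarrow> bool \<Rightarrow> (nat \<Rightarrow> int) \<Rightarrow> int \<Rightarrow> nat \<Rightarrow> nat \<Rightarrow> bool" where
  "bsinv xs t s r T0 lo hi \<longleftrightarrow> r 0 = int (length xs) \<and> r 1 = 1 \<and> r t = T0 \<and> r 2 = int lo \<and> r 3 = int hi
     \<and> lo < hi \<and> hi \<le> Suc (length xs) \<and> bsP xs T0 s lo \<and> (hi = Suc (length xs) \<or> \<not> bsP xs T0 s hi)"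

lemma bs_exit:
  assumes sg: "seg p b (rel b (bsc t s))" and r1: "r 1 = 1" and w: "r 3 - r 2 = 1"
  shows "\<exists>r'. (step p xs ^^ 3) (atp b 2, r) = (atp b 16, r') \<and> r' 2 = r 2 \<and> (\<forall>q. q \<notin> {2..8} \<longrightarrow> r' q = r q)"
  using r1 w by (simp add: funpow_numeral funpow_one step_rel[OF sg] bsc_def)

lemma bs_iter:
  assumes sg: "seg p b (rel b (bsc t s))" and tn: "t \<notin> {2..8}"
    and inv: "bsinv xs t s r T0 lo hi" and w: "Suc lo < hi"
  shows "\<exists>r' lo' hi'. (step p xs ^^ 12) (atp b 2, r) = (atp b 2, r') \<and> bsinv xs t s r' T0 lo' hi'
     \<and> hi' - lo' \<le> (hi - lo + 1) div 2 \<and> (\<forall>q. q \<notin> {2..8} \<longrightarrow> r' q = r q)"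
proof -
  define mid where "mid = (lo + hi) div 2"
  have m1: "lo < mid" "mid < hi" using w unfolding mid_def by auto
  have m2: "1 \<le> mid" "mid \<le> length xs" using m1 inv unfolding bsinv_def by auto
  have r: "r 0 = int (length xs)" "r 1 = 1" "r t = T0" "r 2 = int lo" "r 3 = int hi"
    using inv unfolding bsinv_def by auto
  have c1: "1 < int hi - int lo" using w by simp
  have c2: "(int lo + int hi) div 2 = int mid" unfolding mid_def by simp
  have c3: "0 \<le> int mid - 1" "int mid - 1 < int (length xs)" "nat (int mid - 1) = mid - 1" using m2 by auto
  have tt: "t \<noteq> 2" "t \<noteq> 3" "t \<noteq> 4" "t \<noteq> 5" "t \<noteq> 6" "t \<noteq> 7" "t \<noteq> 8" using tn by auto
  define th where "th = T0 + (if s then int mid else 0)"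
  have P: "bsP xs T0 s mid \<longleftrightarrow> th \<le> xs ! (mid - 1)" using m2 unfolding bsP_def th_def by auto
  show ?thesis
  proof (cases "bsP xs T0 s mid")
    case True
    have "\<exists>r'. (step p xs ^^ 12) (atp b 2, r) = (atp b 2, r') \<and> r' 2 = int mid \<and> r' 3 = int hi
       \<and> (\<forall>q. q \<notin> {2..8} \<longrightarrow> r' q = r q)"
      using r c1 c2 c3 tt True unfolding P th_def
      by (cases s) (simp_all add: funpow_numeral funpow_one step_rel[OF sg] bsc_def)
    then obtain r' where "(step p xs ^^ 12) (atp b 2, r) = (atp b 2, r')" "r' 2 = int mid" "r' 3 = int hi"
       "\<forall>q. q \<notin> {2..8} \<longrightarrow> r' q = r q" by blast
    moreover have "bsinv xs t s r' T0 mid hi" using calculation inv m1 True tn unfolding bsinv_def by auto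
    moreover have "hi - mid \<le> (hi - lo + 1) div 2" unfolding mid_def by simp
    ultimately show ?thesis by blast
  next
    case False
    have "\<exists>r'. (step p xs ^^ 12) (atp b 2, r) = (atp b 2, r') \<and> r' 2 = int lo \<and> r' 3 = int mid
       \<and> (\<forall>q. q \<notin> {2..8} \<longrightarrow> r' q = r q)"
      using r c1 c2 c3 tt False unfolding P th_def
      by (cases s) (simp_all add: funpow_numeral funpow_one step_rel[OF sg] bsc_def)
    then obtain r' where "(step p xs ^^ 12) (atp b 2, r) = (atp b 2, r')" "r' 2 = int lo" "r' 3 = int mid"
       "\<forall>q. q \<notin> {2..8} \<longrightarrow> r' q = r q" by blast
    moreover have "bsinv xs t s r' T0 lo mid" using calculation inv m1 False tn unfolding bsinv_def by auto
    moreover have "mid - lo \<le> (hi - lo + 1) div 2" unfolding mid_def by simp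
    ultimately show ?thesis by blast
  qed
qed

lemma bs_loop:
  assumes sg: "seg p b (rel b (bsc t s))" and tn: "t \<notin> {2..8}"
  shows "bsinv xs t s r T0 lo hi \<Longrightarrow> hi - lo \<le> 2 ^ k \<Longrightarrow>
    \<exists>n r' lo'. n \<le> 12 * k + 3 \<and> (step p xs ^^ n) (atp b 2, r) = (atp b 16, r') \<and> r' 2 = int lo'
      \<and> bsP xs T0 s lo' \<and> (lo' = length xs \<or> \<not> bsP xs T0 s (Suc lo')) \<and> (\<forall>q. q \<notin> {2..8} \<longrightarrow> r' q = r q)"
proof (induction k arbitrary: r lo hi)
  case 0
  then have h: "hi = Suc lo" unfolding bsinv_def by auto
  have "r 1 = 1" "r 3 - r 2 = 1" using 0 h unfolding bsinv_def by auto
  then obtain r' where "(step p xs ^^ 3) (atp b 2, r) = (atp b 16, r')" "r' 2 = r 2" "\<forall>q. q \<notin> {2..8} \<longrightarrow> r' q = r q"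
    using bs_exit[OF sg] by blast
  moreover have "r' 2 = int lo" "bsP xs T0 s lo" "lo = length xs \<or> \<not> bsP xs T0 s (Suc lo)"
    using 0 h calculation(2,3) unfolding bsinv_def by auto
  ultimately show ?case by (intro exI[of _ 3] exI[of _ r'] exI[of _ lo]) auto
next
  case (Suc k)
  show ?case
  proof (cases "hi = Suc lo")
    case h: True
    have "r 1 = 1" "r 3 - r 2 = 1" using Suc.prems h unfolding bsinv_def by auto
    then obtain r' where "(step p xs ^^ 3) (atp b 2, r) = (atp b 16, r')" "r' 2 = r 2" "\<forall>q. q \<notin> {2..8} \<longrightarrow> r' q = r q"
      using bs_exit[OF sg] by blast
    moreover have "r' 2 = int lo" "bsP xs T0 s lo" "lo = length xs \<or> \<not> bsP xs T0 s (Suc lo)"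
      using Suc.prems h calculation(2,3) unfolding bsinv_def by auto
    ultimately show ?thesis by (intro exI[of _ 3] exI[of _ r'] exI[of _ lo]) auto
  next
    case False
    then have w: "Suc lo < hi" using Suc.prems unfolding bsinv_def by auto
    obtain r1 lo1 hi1 where it: "(step p xs ^^ 12) (atp b 2, r) = (atp b 2, r1)" "bsinv xs t s r1 T0 lo1 hi1"
      "hi1 - lo1 \<le> (hi - lo + 1) div 2" "\<forall>q. q \<notin> {2..8} \<longrightarrow> r1 q = r q"
      using bs_iter[OF sg tn Suc.prems(1) w] by blast
    have "hi1 - lo1 \<le> 2 ^ k" using it(3) Suc.prems(2) w by simp
    then obtain n r' lo' where ih: "n \<le> 12 * k + 3" "(step p xs ^^ n) (atp b 2, r1) = (atp b 16, r')" "r' 2 = int lo'"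
      "bsP xs T0 s lo'" "lo' = length xs \<or> \<not> bsP xs T0 s (Suc lo')" "\<forall>q. q \<notin> {2..8} \<longrightarrow> r' q = r1 q"
      using Suc.IH[OF it(2)] by blast
    have "(step p xs ^^ (n + 12)) (atp b 2, r) = (atp b 16, r')"
      by (simp only: funpow_add comp_apply it(1) ih(2))
    moreover have "n + 12 \<le> 12 * Suc k + 3" using ih(1) by simp
    ultimately show ?thesis using ih it(4) by (intro exI[of _ "n+12"] exI[of _ r'] exI[of _ lo']) auto
  qed
qed

lemma bs_run:
  assumes sg: "seg p b (rel b (bsc t s))" and tn: "t \<notin> {2..8}"
    and r0: "r 0 = int (length xs)" and r1: "r 1 = 1" and k: "Suc (length xs) \<le> 2 ^ k"
  shows "\<exists>n r' lo. n \<le> 12 * k + 5 \<and> (step p xs ^^ n) (atp b 0, r) = (atp b 16, r') \<and> r' 2 = int lo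
      \<and> bsP xs (r t) s lo \<and> (lo = length xs \<or> \<not> bsP xs (r t) s (Suc lo)) \<and> (\<forall>q. q \<notin> {2..8} \<longrightarrow> r' q = r q)"
proof -
  have tt: "t \<noteq> 2" "t \<noteq> 3" using tn by auto
  have st: "(step p xs ^^ 2) (atp b 0, r) = (atp b 2, r(2 := 0, 3 := int (length xs) + 1))"
    using r0 r1 by (simp add: funpow_numeral funpow_one step_rel[OF sg] bsc_def) (simp add: numeral_2_eq_2)
  have inv: "bsinv xs t s (r(2 := 0, 3 := int (length xs) + 1)) (r t) 0 (Suc (length xs))"
    unfolding bsinv_def bsP_def using r0 r1 tt by auto
  obtain n r' lo where l: "n \<le> 12 * k + 3" "(step p xs ^^ n) (atp b 2, r(2 := 0, 3 := int (length xs) + 1)) = (atp b 16, r')"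
    "r' 2 = int lo" "bsP xs (r t) s lo" "(lo = length xs \<or> \<not> bsP xs (r t) s (Suc lo))"
    "\<forall>q. q \<notin> {2..8} \<longrightarrow> r' q = (r(2 := 0, 3 := int (length xs) + 1)) q"
    using bs_loop[OF sg tn inv, of k] k by auto
  have "(step p xs ^^ (n + 2)) (atp b 0, r) = (atp b 16, r')"
    by (simp only: funpow_add comp_apply st l(2))
  moreover have "\<forall>q. q \<notin> {2..8} \<longrightarrow> r' q = r q" using l(6) by auto
  ultimately show ?thesis using l by (intro exI[of _ "n+2"] exI[of _ r'] exI[of _ lo]) auto
qed

fun sexec :: "int list \<Rightarrow> instr \<Rightarrow> (nat \<Rightarrow> int) \<Rightarrow> (nat \<Rightarrow> int)" where
  "sexec xs (Const d c) r = r(d := c)"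
| "sexec xs (Mov d a) r = r(d := r a)"
| "sexec xs (Add d a b) r = r(d := r a + r b)"
| "sexec xs (Sub d a b) r = r(d := r a - r b)"
| "sexec xs (Mul d a b) r = r(d := r a * r b)"
| "sexec xs (Half d a) r = r(d := r a div 2)"
| "sexec xs (Par d a) r = r(d := r a mod 2)"
| "sexec xs (Lt d a b) r = r(d := (if r a < r b then 1 else 0))"
| "sexec xs (Eq d a b) r = r(d := (if r a = r b then 1 else 0))"
| "sexec xs (Mex d a b) r = r(d := mex_int (r a) (r b))"
| "sexec xs (Read d a) r = r(d := (if 0 \<le> r a \<and> r a < int (length xs) then xs ! nat (r a) else 0))"
| "sexec xs (Jmp t) r = r"
| "sexec xs (Jz a t) r = r"

fun simple :: "instr \<Rightarrow> bool" where
  "simple (Jmp t) = False"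
| "simple (Jz a t) = False"
| "simple i = True"

lemma exec_simple: "simple i \<Longrightarrow> exec xs i (pc, r) = (Suc pc, sexec xs i r)"
  by (cases i) auto

fun srun :: "int list \<Rightarrow> instr list \<Rightarrow> (nat \<Rightarrow> int) \<Rightarrow> (nat \<Rightarrow> int)" where
  "srun xs [] r = r"
| "srun xs (i # c) r = srun xs c (sexec xs i r)"

lemma srun_append: "srun xs (c1 @ c2) r = srun xs c2 (srun xs c1 r)"
  by (induction c1 arbitrary: r) auto

lemma run_straight_gen:
  assumes sg: "seg p b (rel b C)" and simp: "list_all simple C"
  shows "i \<le> length C \<Longrightarrow> (step p xs ^^ (length C - i)) (atp b i, r) = (atp b (length C), srun xs (drop i C) r)"
proof (induction "length C - i" arbitrary: i r)
  case 0 then show ?case by simp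
next
  case (Suc k)
  then have i: "i < length C" by simp
  have si: "simple (C ! i)" using simp i by (simp add: list_all_length)
  have st: "step p xs (atp b i, r) = (atp b (Suc i), sexec xs (C ! i) r)"
    using step_rel[OF sg i] exec_simple[OF si] by simp
  have d: "drop i C = C ! i # drop (Suc i) C" using i by (simp add: Cons_nth_drop_Suc)
  have "(step p xs ^^ (length C - i)) (atp b i, r) = (step p xs ^^ (length C - Suc i)) (step p xs (atp b i, r))"
    using Suc.hyps(2) by (metis Suc_diff_Suc funpow_step i)
  also have "\<dots> = (atp b (length C), srun xs (drop (Suc i) C) (sexec xs (C ! i) r))"
    unfolding st using Suc.hyps(1)[of "Suc i"] Suc.hyps(2) i by simp
  finally show ?case unfolding d by simp
qed

lemma run_straight:
  assumes "seg p b (rel b C)" "list_all simple C"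
  shows "(step p xs ^^ length C) (atp b 0, r) = (atp b (length C), srun xs C r)"
  using run_straight_gen[OF assms, of 0] by simp

definition clipc :: "nat \<Rightarrow> nat \<Rightarrow> instr list" where
  "clipc dst src = [Const 56 3, Sub 57 src 56, Lt 58 9 57, Mul dst 57 58, Const 56 0, Const 57 0, Const 58 0]"

lemma clip_ex:
  assumes "dst \<notin> {56,57,58}" "src \<notin> {56,57,58}" "r 9 = 0"
  shows "srun xs (clipc dst src) r = r(dst := int (nat (r src - 3)), 56 := 0, 57 := 0, 58 := 0)"
  using assms by (auto simp: clipc_def fun_eq_iff)

definition redc :: "nat \<Rightarrow> nat \<Rightarrow> instr list" where
  "redc dst src = [Const 56 4, Lt 57 56 src, Add 58 src 1, Par 58 58, Const 59 3, Add 58 58 59, Sub 58 58 src,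
     Mul 58 58 57, Add dst src 58, Const 56 0, Const 57 0, Const 58 0, Const 59 0]"

lemma red_int0: "int n + ((int n + 1) mod 2 + 3 - int n) * (if 4 < int n then 1 else 0) = int (red n)"
proof -
  have "(int n + 1) mod 2 = int ((n + 1) mod 2)" by (simp add: zmod_int add.commute)
  then show ?thesis unfolding red_def by auto
qed

lemma red_int: "0 \<le> x \<Longrightarrow> x + ((x + 1) mod 2 + 3 - x) * (if 4 < x then 1 else 0) = int (red (nat x))"
  using red_int0[of "nat x"] by simp

lemma red_ex:
  assumes "dst \<notin> {1,56,57,58,59}" "src \<notin> {56,57,58,59}" "0 \<le> r src" "r 1 = 1"
  shows "srun xs (redc dst src) r = r(dst := int (red (nat (r src))), 56 := 0, 57 := 0, 58 := 0, 59 := 0)"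
  using assms red_int[of "r src"] by (auto simp: redc_def fun_eq_iff algebra_simps)

definition cF :: "nat \<Rightarrow> nat \<Rightarrow> nat \<Rightarrow> tri \<Rightarrow> tri" where
  "cF k t n y = (if t < n then Fm k y else y)"

fun Fcode :: "nat \<Rightarrow> nat \<Rightarrow> instr list" where
  "Fcode k X0 = (if k = 3 then [Mex 62 (X0+2) 9, Mex 61 (X0+1) 62, Mex 60 X0 61]
     else if k = 2 then [Const 62 0, Mex 61 (X0+1) 9, Mex 60 X0 61]
     else [Const 62 0, Const 61 0, Mex 60 X0 9])"

definition condF :: "nat \<Rightarrow> nat \<Rightarrow> nat \<Rightarrow> nat \<Rightarrow> instr list" where
  "condF k t X0 cnt = [Const 56 (int t), Lt 57 56 cnt] @ Fcode k X0 @
    [Sub 63 60 X0, Mul 63 63 57, Add X0 X0 63, Sub 63 61 (X0+1), Mul 63 63 57, Add (X0+1) (X0+1) 63,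
     Sub 63 62 (X0+2), Mul 63 63 57, Add (X0+2) (X0+2) 63,
     Const 56 0, Const 57 0, Const 60 0, Const 61 0, Const 62 0, Const 63 0]"

lemma mex_int_0: "mex_int (int a) 0 = int (mex2 a 0)" using mex_int_eq[of a 0] by simp
lemma flag_sel: "int x + (int y - int x) * (if c then 1 else 0) = int (if c then y else x)" by simp

definition keep :: "(nat \<Rightarrow> int) \<Rightarrow> (nat \<Rightarrow> int) \<Rightarrow> nat set \<Rightarrow> bool" where
  "keep r r' S \<longleftrightarrow> (\<forall>q. q \<notin> S \<longrightarrow> r' q = r q)"

definition nn3 :: "(nat \<Rightarrow> int) \<Rightarrow> nat \<Rightarrow> bool" where
  "nn3 r X0 \<longleftrightarrow> 0 \<le> r X0 \<and> 0 \<le> r (X0+1) \<and> 0 \<le> r (X0+2)"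

definition tri_at :: "(nat \<Rightarrow> int) \<Rightarrow> nat \<Rightarrow> tri" where
  "tri_at r X0 = (nat (r X0), nat (r (X0+1)), nat (r (X0+2)))"

lemma condF_spec1:
  assumes X: "X0 = 42 \<or> X0 = 45" and cn: "cnt \<in> {36..41}" and r9: "r 9 = 0"
    and xs: "r X0 = int x0" "r (X0+1) = int x1" "r (X0+2) = int x2" "r cnt = int n"
    and k: "k = 1 \<or> k = 2 \<or> k = 3"
  shows "tri_at (srun xs (condF k t X0 cnt) r) X0 = cF k t n (x0,x1,x2) \<and> nn3 (srun xs (condF k t X0 cnt) r) X0
     \<and> keep r (srun xs (condF k t X0 cnt) r) {X0, X0+1, X0+2, 56,57,60,61,62,63}"
  using X k
proof (elim disjE)
qed (use cn r9 xs in \<open>simp_all add: condF_def cF_def Fm_def Let_def mex_int_eq mex_int_0 tri_at_def nn3_def keep_def\<close>)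

lemma nn3_tri:
  assumes "nn3 r X0" "tri_at r X0 = (a,b,c)"
  shows "r X0 = int a" "r (X0+1) = int b" "r (X0+2) = int c"
  using assms unfolding nn3_def tri_at_def by auto

lemma keep_trans: "keep r r1 S \<Longrightarrow> keep r1 r2 S \<Longrightarrow> keep r r2 S"
  unfolding keep_def by auto

lemma condFs_spec:
  assumes X: "X0 = 42 \<or> X0 = 45" and cn: "cnt \<in> {36..41}" and k: "k = 1 \<or> k = 2 \<or> k = 3"
  shows "r 9 = 0 \<Longrightarrow> nn3 r X0 \<Longrightarrow> r cnt = int n \<Longrightarrow>
    tri_at (srun xs (concat (map (\<lambda>t. condF k t X0 cnt) ts)) r) X0 = foldl (\<lambda>y t. cF k t n y) (tri_at r X0) ts
    \<and> nn3 (srun xs (concat (map (\<lambda>t. condF k t X0 cnt) ts)) r) X0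
    \<and> keep r (srun xs (concat (map (\<lambda>t. condF k t X0 cnt) ts)) r) {X0, X0+1, X0+2, 56,57,60,61,62,63}"
proof (induction ts arbitrary: r)
  case Nil then show ?case by (simp add: keep_def)
next
  case (Cons t ts)
  obtain a b c where abc: "tri_at r X0 = (a,b,c)" by (cases "tri_at r X0") auto
  note xs = nn3_tri[OF Cons.prems(2) abc]
  define r1 where "r1 = srun xs (condF k t X0 cnt) r"
  have s1: "tri_at r1 X0 = cF k t n (a,b,c)" "nn3 r1 X0" "keep r r1 {X0, X0+1, X0+2, 56,57,60,61,62,63}"
    using condF_spec1[OF X cn Cons.prems(1) xs Cons.prems(3) k] unfolding r1_def by auto
  have nk: "9 \<notin> {X0, X0+1, X0+2, 56,57,60,61,62,63}" "cnt \<notin> {X0, X0+1, X0+2, 56,57,60,61,62,63}"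
    using X cn by auto
  have r19: "r1 9 = 0" "r1 cnt = int n" using s1(3) nk Cons.prems(1,3) unfolding keep_def by auto
  note ih = Cons.IH[OF r19(1) s1(2) r19(2)]
  show ?case
    using ih s1 abc keep_trans[OF s1(3)] unfolding r1_def by (simp add: srun_append)
qed

definition condFs :: "nat \<Rightarrow> nat \<Rightarrow> nat \<Rightarrow> instr list" where
  "condFs k X0 cnt = concat (map (\<lambda>t. condF k t X0 cnt) [0,1,2,3])"

definition armc :: "nat \<Rightarrow> nat \<Rightarrow> instr list" where
  "armc X0 cnt = condFs 1 X0 cnt @ condFs 2 X0 (cnt+1) @ condFs 3 X0 (cnt+2)"

definition cpow :: "nat \<Rightarrow> nat \<Rightarrow> tri \<Rightarrow> tri" where
  "cpow k n y = foldl (\<lambda>y t. cF k t n y) y [0,1,2,3]"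

lemma cpow_eq: "n \<le> 4 \<Longrightarrow> cpow k n y = (Fm k ^^ n) y"
proof -
  assume "n \<le> 4"
  then have "n = 0 \<or> n = 1 \<or> n = 2 \<or> n = 3 \<or> n = 4" by linarith
  then show ?thesis unfolding cpow_def cF_def
    by (elim disjE) (simp_all add: funpow_numeral funpow_one)
qed

lemma arm_spec:
  assumes X: "X0 = 42 \<or> X0 = 45" and cn: "cnt \<in> {36..39}"
    and r9: "r 9 = 0" and nn: "nn3 r X0" and c: "r cnt = int n1" "r (cnt+1) = int n2" "r (cnt+2) = int n3"
  shows "tri_at (srun xs (armc X0 cnt) r) X0 = cpow 3 n3 (cpow 2 n2 (cpow 1 n1 (tri_at r X0)))
    \<and> nn3 (srun xs (armc X0 cnt) r) X0
    \<and> keep r (srun xs (armc X0 cnt) r) {X0, X0+1, X0+2, 56,57,60,61,62,63}"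
proof -
  let ?S = "{X0, X0+1, X0+2, 56,57,60,61,62,63}"
  have nk: "9 \<notin> ?S" "cnt \<notin> ?S" "cnt+1 \<notin> ?S" "cnt+2 \<notin> ?S" using X cn by auto
  define r1 where "r1 = srun xs (condFs 1 X0 cnt) r"
  have s1: "tri_at r1 X0 = cpow 1 n1 (tri_at r X0)" "nn3 r1 X0" "keep r r1 ?S"
    using condFs_spec[OF X _ _ r9 nn c(1), where k=1 and ts="[0,1,2,3]" and xs=xs] cn unfolding r1_def condFs_def cpow_def by auto
  have q1: "r1 9 = 0" "r1 (cnt+1) = int n2" "r1 (cnt+2) = int n3" using s1(3) nk r9 c unfolding keep_def by auto
  define r2 where "r2 = srun xs (condFs 2 X0 (cnt+1)) r1"
  have s2: "tri_at r2 X0 = cpow 2 n2 (tri_at r1 X0)" "nn3 r2 X0" "keep r1 r2 ?S"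
    using condFs_spec[OF X _ _ q1(1) s1(2) q1(2), where k=2 and ts="[0,1,2,3]" and xs=xs] cn unfolding r2_def condFs_def cpow_def by auto
  have q2: "r2 9 = 0" "r2 (cnt+2) = int n3" using s2(3) nk q1 unfolding keep_def by auto
  define r3 where "r3 = srun xs (condFs 3 X0 (cnt+2)) r2"
  have s3: "tri_at r3 X0 = cpow 3 n3 (tri_at r2 X0)" "nn3 r3 X0" "keep r2 r3 ?S"
    using condFs_spec[OF X _ _ q2(1) s2(2) q2(2), where k=3 and ts="[0,1,2,3]" and xs=xs] cn unfolding r3_def condFs_def cpow_def by auto
  have "srun xs (armc X0 cnt) r = r3" unfolding r3_def r2_def r1_def by (simp only: armc_def srun_append)
  moreover have "keep r r3 ?S" using keep_trans[OF keep_trans[OF s1(3) s2(3)] s3(3)] .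
  moreover have "tri_at r3 X0 = cpow 3 n3 (cpow 2 n2 (cpow 1 n1 (tri_at r X0)))" by (simp only: s3(1) s2(1) s1(1))
  ultimately show ?thesis using s3(2) by simp
qed

definition cellc :: "nat \<Rightarrow> nat \<Rightarrow> nat \<Rightarrow> nat \<Rightarrow> nat \<Rightarrow> instr list" where
  "cellc dst below right ai j = [Mex 63 below right, Const 56 (int j), Lt 57 56 ai, Mul dst 63 57,
     Const 56 0, Const 57 0, Const 63 0]"

lemma int_flag: "int m * (if c then 1 else 0) = int (if c then m else 0)" by simp

definition corec :: "instr list" where
  "corec = cellc 78 47 44 20 2 @ cellc 77 46 78 20 1 @ cellc 76 45 77 20 0 @
            cellc 75 78 43 19 2 @ cellc 74 77 75 19 1 @ cellc 73 76 74 19 0 @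
            cellc 72 75 42 18 2 @ cellc 71 74 72 18 1 @ cellc 70 73 71 18 0"

lemma core_run:
  assumes "nn3 r 42" "nn3 r 45"
  shows "srun xs corec r 70 = int (core (nat (r 18)) (nat (r 19)) (nat (r 20)) (tri_at r 42) (tri_at r 45))"
proof -
  have "0 \<le> r 42" "0 \<le> r 43" "0 \<le> r 44" "0 \<le> r 45" "0 \<le> r 46" "0 \<le> r 47" using assms unfolding nn3_def by simp_all
  then obtain a b c d e f where abc: "r 42 = int a" "r 43 = int b" "r 44 = int c" "r 45 = int d" "r 46 = int e" "r 47 = int f"
    by (metis nonneg_int_cases)
  show ?thesis using abc unfolding corec_def tri_at_def
  by (simp add: cellc_def core_def Let_def mex_int_eq int_flag zless_nat_eq_int_zless)
qed

definition readc :: "instr list" where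
  "readc = [Read 54 11, Sub 18 54 11, Add 55 11 1, Read 54 55, Sub 19 54 11, Const 56 2, Add 55 11 56,
    Read 54 55, Sub 20 54 11, Sub 21 15 11, Sub 22 16 11, Sub 23 17 11, Const 54 0, Const 55 0, Const 56 0]"

lemma sexec_read: "0 \<le> r a \<Longrightarrow> sexec (map int l) (Read d a) r = r(d := int (ent l (nat (r a))))"
  by (auto simp: ent_def)

lemma read_spec:
  assumes "r 11 = int m" "r 1 = 1"
  shows "srun (map int l) readc r 18 = int (ent l m) - int m
    \<and> srun (map int l) readc r 19 = int (ent l (m+1)) - int m
    \<and> srun (map int l) readc r 20 = int (ent l (m+2)) - int m
    \<and> srun (map int l) readc r 21 = r 15 - int m
    \<and> srun (map int l) readc r 22 = r 16 - int m
    \<and> srun (map int l) readc r 23 = r 17 - int m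
    \<and> keep r (srun (map int l) readc r) {18,19,20,21,22,23,54,55,56}"
proof -
  have e: "nat (int m + 1) = m + 1" "nat (int m + 2) = m + 2" by simp_all
  show ?thesis using assms by (simp add: readc_def sexec_read keep_def e del: sexec.simps(11))
qed

definition prepc :: "instr list" where
  "prepc = clipc 24 18 @ clipc 25 19 @ clipc 26 20 @ clipc 27 21 @ clipc 28 22 @ clipc 29 23 @
    [Sub 30 24 25, Sub 31 25 26, Mov 32 26, Sub 33 27 28, Sub 34 28 29, Mov 35 29] @
    redc 36 30 @ redc 37 31 @ redc 38 32 @ redc 39 33 @ redc 40 34 @ redc 41 35 @
    [Const 42 0, Const 43 0, Const 44 0, Const 45 0, Const 46 0, Const 47 0]"

lemma nat_int_sub: "nat (int a - int b) = a - b" by simp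

definition clip3 :: "int \<Rightarrow> nat" where "clip3 x = nat (x - 3)"

lemma clip_ex':
  assumes "dst \<notin> {56,57,58}" "src \<notin> {56,57,58}" "r 9 = 0"
  shows "srun xs (clipc dst src) r = r(dst := int (clip3 (r src)), 56 := 0, 57 := 0, 58 := 0)"
  using clip_ex[of dst src r xs] assms unfolding clip3_def by simp

lemma prep_spec:
  assumes r9: "r 9 = 0" and r1: "r 1 = 1"
    and m: "clip3 (r 19) \<le> clip3 (r 18)" "clip3 (r 20) \<le> clip3 (r 19)"
       "clip3 (r 22) \<le> clip3 (r 21)" "clip3 (r 23) \<le> clip3 (r 22)"
  shows "srun xs prepc r 36 = int (red (clip3 (r 18) - clip3 (r 19)))
    \<and> srun xs prepc r 37 = int (red (clip3 (r 19) - clip3 (r 20)))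
    \<and> srun xs prepc r 38 = int (red (clip3 (r 20)))
    \<and> srun xs prepc r 39 = int (red (clip3 (r 21) - clip3 (r 22)))
    \<and> srun xs prepc r 40 = int (red (clip3 (r 22) - clip3 (r 23)))
    \<and> srun xs prepc r 41 = int (red (clip3 (r 23)))
    \<and> tri_at (srun xs prepc r) 42 = (0,0,0) \<and> tri_at (srun xs prepc r) 45 = (0,0,0)
    \<and> nn3 (srun xs prepc r) 42 \<and> nn3 (srun xs prepc r) 45
    \<and> keep r (srun xs prepc r) ({24..47} \<union> {56..59})"
  using assms by (simp add: prepc_def srun_append clip_ex' red_ex nat_int_sub tri_at_def nn3_def keep_def)

lemma shift00: "\<forall>x\<in>set l. 0 < x \<Longrightarrow> shift 0 0 l = l"
  unfolding shift_def by (simp add: filter_id_conv)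

lemma d_char:
  assumes s: "sorted_wrt (\<ge>) lam" and b: "bsP (map int lam) 0 True d" and e: "d = length lam \<or> \<not> bsP (map int lam) 0 True (Suc d)"
  shows "d \<le> length lam" "\<And>i. i < d \<Longrightarrow> i < ent lam i" "\<not> d < ent lam d"
proof -
  show dl: "d \<le> length lam" using b unfolding bsP_def by auto
  show "i < ent lam i" if "i < d" for i
  proof -
    have "d \<le> lam ! (d - 1)" using b that unfolding bsP_def by auto
    moreover have "ent lam (d-1) = lam ! (d-1)" using dl that unfolding ent_def by auto
    moreover have "ent lam (d-1) \<le> ent lam i" using ent_mono[OF s] that by simp
    ultimately show ?thesis using that by simp
  qed
  show "\<not> d < ent lam d"
  proof (cases "d = length lam")
    case True then show ?thesis unfolding ent_def by simp
  next
    case False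
    then have "d < length lam" "\<not> int (Suc d) \<le> int (lam ! d)" using e dl unfolding bsP_def by auto
    then show ?thesis unfolding ent_def by simp
  qed
qed

lemma c_char:
  assumes s: "sorted_wrt (\<ge>) lam" and b: "bsP (map int lam) (int T) False lo"
    and e: "lo = length lam \<or> \<not> bsP (map int lam) (int T) False (Suc lo)" and T: "0 < T"
  shows "i < lo \<longleftrightarrow> T \<le> ent lam i"
proof
  have ll: "lo \<le> length lam" using b unfolding bsP_def by auto
  assume i: "i < lo"
  then have "T \<le> lam ! (lo - 1)" using b ll unfolding bsP_def by auto
  moreover have "ent lam (lo-1) = lam ! (lo-1)" using ll i unfolding ent_def by auto
  moreover have "ent lam (lo-1) \<le> ent lam i" using ent_mono[OF s] i by simp
  ultimately show "T \<le> ent lam i" by simp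
next
  have ll: "lo \<le> length lam" using b unfolding bsP_def by auto
  assume Ti: "T \<le> ent lam i"
  show "i < lo"
  proof (rule ccontr)
    assume "\<not> i < lo"
    then have il: "lo \<le> i" by simp
    show False
    proof (cases "lo = length lam")
      case True then show False using Ti il T unfolding ent_def by auto
    next
      case False
      then have "lo < length lam" "\<not> int T \<le> int (lam ! lo)" using e ll unfolding bsP_def by auto
      moreover have "ent lam i \<le> ent lam lo" using ent_mono[OF s] il by simp
      ultimately show False using Ti unfolding ent_def by auto
    qed
  qed
qed

lemma main_math:
  assumes s: "sorted_wrt (\<ge>) lam" and pos: "\<forall>x\<in>set lam. 0 < x"
    and d1: "\<And>i. i < d \<Longrightarrow> i < ent lam i" and d2: "\<not> d < ent lam d"
    and m: "m = d - 3"
    and cP: "\<And>k i. k < 3 \<Longrightarrow> (i < cnt k \<longleftrightarrow> m + k + 1 \<le> ent lam i)"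
  shows "sg lam = core (ent lam m - m) (ent lam (m+1) - m) (ent lam (m+2) - m)
     (armW (ent lam m - m) (ent lam (m+1) - m) (ent lam (m+2) - m)) (armW (cnt 0 - m) (cnt 1 - m) (cnt 2 - m))"
proof -
  have "sg lam = G lam 0 0" unfolding G_def using shift00[OF pos] by simp
  also have "\<dots> = G lam m m"
  proof (rule G_diag_iter[OF s])
    fix k assume "k < m"
    then have "k + 3 < d" using m by simp
    then show "k + 3 < ent lam (k + 3)" using d1 by simp
  qed
  also have "\<dots> = core (ent lam m - m) (ent lam (m+1) - m) (ent lam (m+2) - m)
     (armW (ent lam m - m) (ent lam (m+1) - m) (ent lam (m+2) - m)) (armW (cnt 0 - m) (cnt 1 - m) (cnt 2 - m))"
  proof -
    have H1: "\<And>i j. G lam (m + i) (m + j) = (if j < ent lam (m + i) - m then mex2 (G lam (m + Suc i) (m + j)) (G lam (m + i) (m + Suc j)) else 0)"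
    proof -
      fix i j
      have c: "(m + j < ent lam (m+i)) = (j < ent lam (m+i) - m)" by auto
      show "G lam (m + i) (m + j) = (if j < ent lam (m + i) - m then mex2 (G lam (m + Suc i) (m + j)) (G lam (m + i) (m + Suc j)) else 0)"
        by (subst G_rec[OF s, of "m+i" "m+j"]) (simp only: c add_Suc_right)
    qed
    have H2: "\<And>i. ent lam (m + Suc i) - m \<le> ent lam (m + i) - m" using ent_mono[OF s] by (simp add: diff_le_mono)
    have H3: "ent lam (m + 3) - m \<le> 3"
    proof (cases "3 \<le> d")
      case True then have "m + 3 = d" using m by simp
      then show ?thesis using d2 by simp
    next
      case False then have "m = 0" using m by simp
      moreover have "ent lam 3 \<le> ent lam d" using ent_mono[OF s, of d 3] False by simp
      ultimately show ?thesis using d2 False by simp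
    qed
    have H4: "\<And>i k. k < 3 \<Longrightarrow> (k < ent lam (m + i) - m \<longleftrightarrow> i < cnt k - m)"
    proof -
      fix i k :: nat assume k: "k < 3"
      have "k < ent lam (m + i) - m \<longleftrightarrow> m + k + 1 \<le> ent lam (m+i)" by auto
      also have "\<dots> \<longleftrightarrow> m + i < cnt k" using cP[OF k, of "m+i"] by simp
      also have "\<dots> \<longleftrightarrow> i < cnt k - m" by auto
      finally show "k < ent lam (m + i) - m \<longleftrightarrow> i < cnt k - m" .
    qed
    note gr = grid[of "\<lambda>i j. G lam (m+i) (m+j)" "\<lambda>i. ent lam (m+i) - m" "\<lambda>k. cnt k - m", OF H1 H2 H3 H4]
    then show ?thesis by simp
  qed
  finally show ?thesis by simp
qed

lemma armW_cpow:
  "armW e0 e1 e2 = cpow 3 (red (e2-3)) (cpow 2 (red ((e1-3)-(e2-3))) (cpow 1 (red ((e0-3)-(e1-3))) (0,0,0)))"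
proof -
  have b0: "bnd (0,0,0)" unfolding bnd_def by simp
  have rl: "red n \<le> 4" for n unfolding red_def by auto
  define t1 where "t1 = (Fm 1 ^^ ((e0-3)-(e1-3))) (0,0,0)"
  define t2 where "t2 = (Fm 2 ^^ ((e1-3)-(e2-3))) t1"
  have bt1: "bnd t1" unfolding t1_def by (rule Fm_pow_bnd[OF b0])
  have bt2: "bnd t2" unfolding t2_def by (rule Fm_pow_bnd[OF bt1])
  have e1: "t1 = cpow 1 (red ((e0-3)-(e1-3))) (0,0,0)"
    unfolding t1_def cpow_eq[OF rl] by (rule Fm_pow_red) (simp_all add: b0)
  have e2: "t2 = cpow 2 (red ((e1-3)-(e2-3))) t1"
    unfolding t2_def cpow_eq[OF rl] by (rule Fm_pow_red) (simp_all add: bt1)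
  have e3: "(Fm 3 ^^ (e2-3)) t2 = cpow 3 (red (e2-3)) t2"
    unfolding cpow_eq[OF rl] by (rule Fm_pow_red) (simp_all add: bt2)
  have "armW e0 e1 e2 = (Fm 3 ^^ (e2-3)) t2" unfolding armW_def t2_def t1_def ..
  also have "\<dots> = cpow 3 (red (e2-3)) t2" by (rule e3)
  finally show ?thesis using e1 e2 by simp
qed

definition S2 :: "instr list" where
  "S2 = readc @ prepc @ armc 42 36 @ armc 45 39 @ corec @ [Mov 0 70]"

lemma clip3_mono: "x \<le> y \<Longrightarrow> clip3 x \<le> clip3 y" unfolding clip3_def by simp
lemma clip3_eq: "clip3 (int e - int m) = e - m - 3" unfolding clip3_def by simp
lemma nat_sub_int: "nat (int e - int m) = e - m" by simp

lemma keepD: "keep r r' S \<Longrightarrow> q \<notin> S \<Longrightarrow> r' q = r q" unfolding keep_def by auto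

lemma S2_spec:
  assumes r9: "r 9 = 0" and r1: "r 1 = 1" and r11: "r 11 = int m"
    and rc: "r 15 = int c1" "r 16 = int c2" "r 17 = int c3" and cm: "c2 \<le> c1" "c3 \<le> c2"
    and s: "sorted_wrt (\<ge>) lam"
  shows "srun (map int lam) S2 r 0 = int (core (ent lam m - m) (ent lam (m+1) - m) (ent lam (m+2) - m)
     (armW (ent lam m - m) (ent lam (m+1) - m) (ent lam (m+2) - m)) (armW (c1 - m) (c2 - m) (c3 - m)))"
proof -
  let ?xs = "map int lam"
  define e0 e1 e2 where "e0 = ent lam m" "e1 = ent lam (m+1)" "e2 = ent lam (m+2)"
  have em: "e1 \<le> e0" "e2 \<le> e1" unfolding e0_e1_e2_def using ent_mono[OF s] by auto
  define r1 where "r1 = srun ?xs readc r"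
  have R1: "r1 18 = int e0 - int m" "r1 19 = int e1 - int m" "r1 20 = int e2 - int m"
    "r1 21 = int c1 - int m" "r1 22 = int c2 - int m" "r1 23 = int c3 - int m" "keep r r1 {18,19,20,21,22,23,54,55,56}"
    using read_spec[OF r11 r1, of lam] rc unfolding r1_def e0_e1_e2_def by auto
  have r1b: "r1 9 = 0" "r1 1 = 1" using keepD[OF R1(7)] r9 r1 by auto
  define r2 where "r2 = srun ?xs prepc r1"
  have mono: "clip3 (r1 19) \<le> clip3 (r1 18)" "clip3 (r1 20) \<le> clip3 (r1 19)"
       "clip3 (r1 22) \<le> clip3 (r1 21)" "clip3 (r1 23) \<le> clip3 (r1 22)"
    unfolding R1 using em cm by (auto intro: clip3_mono)
  note P = prep_spec[OF r1b mono, of ?xs, folded r2_def]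
  have P': "r2 36 = int (red ((e0 - m - 3) - (e1 - m - 3)))" "r2 37 = int (red ((e1 - m - 3) - (e2 - m - 3)))"
     "r2 38 = int (red (e2 - m - 3))"
     "r2 39 = int (red ((c1 - m - 3) - (c2 - m - 3)))" "r2 40 = int (red ((c2 - m - 3) - (c3 - m - 3)))"
     "r2 41 = int (red (c3 - m - 3))"
    using P unfolding R1 clip3_eq by auto
  have K2: "keep r1 r2 ({24..47} \<union> {56..59})" using P by blast
  have r2b: "r2 9 = 0" "r2 18 = r1 18" "r2 19 = r1 19" "r2 20 = r1 20"
    using keepD[OF K2, of 9] keepD[OF K2, of 18] keepD[OF K2, of 19] keepD[OF K2, of 20] r1b by auto
  define r3 where "r3 = srun ?xs (armc 42 36) r2"
  have A1': "tri_at r3 42 = cpow 3 (red (e2 - m - 3)) (cpow 2 (red ((e1 - m - 3) - (e2 - m - 3))) (cpow 1 (red ((e0 - m - 3) - (e1 - m - 3))) (0,0,0)))"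
     "nn3 r3 42" "keep r2 r3 {42, 43, 44, 56,57,60,61,62,63}"
  proof -
    have nn: "nn3 r2 42" "tri_at r2 42 = (0,0,0)" using P by blast+
    have AS: "tri_at r3 42 = cpow 3 (red (e2 - m - 3)) (cpow 2 (red ((e1 - m - 3) - (e2 - m - 3))) (cpow 1 (red ((e0 - m - 3) - (e1 - m - 3))) (tri_at r2 42)))
      \<and> nn3 r3 42 \<and> keep r2 r3 {42, 42+1, 42+2, 56,57,60,61,62,63}"
      unfolding r3_def by (rule arm_spec) (use r2b(1) P'(1-3) nn(1) in simp_all)
    then show "tri_at r3 42 = cpow 3 (red (e2 - m - 3)) (cpow 2 (red ((e1 - m - 3) - (e2 - m - 3))) (cpow 1 (red ((e0 - m - 3) - (e1 - m - 3))) (0,0,0)))"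
     "nn3 r3 42" "keep r2 r3 {42, 43, 44, 56,57,60,61,62,63}" unfolding nn(2) by simp_all
  qed
  have r3b: "r3 9 = 0" "r3 39 = r2 39" "r3 40 = r2 40" "r3 41 = r2 41" "r3 18 = r1 18" "r3 19 = r1 19" "r3 20 = r1 20"
    "r3 45 = r2 45" "r3 46 = r2 46" "r3 47 = r2 47"
    using keepD[OF A1'(3), of 9] keepD[OF A1'(3), of 39] keepD[OF A1'(3), of 40] keepD[OF A1'(3), of 41]
      keepD[OF A1'(3), of 18] keepD[OF A1'(3), of 19] keepD[OF A1'(3), of 20]
      keepD[OF A1'(3), of 45] keepD[OF A1'(3), of 46] keepD[OF A1'(3), of 47] r2b by auto
  have nn45: "nn3 r3 45" "tri_at r3 45 = (0,0,0)" using P r3b unfolding nn3_def tri_at_def by auto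
  define r4 where "r4 = srun ?xs (armc 45 39) r3"
  have A2': "tri_at r4 45 = cpow 3 (red (c3 - m - 3)) (cpow 2 (red ((c2 - m - 3) - (c3 - m - 3))) (cpow 1 (red ((c1 - m - 3) - (c2 - m - 3))) (0,0,0)))"
     "nn3 r4 45" "keep r3 r4 {45, 46, 47, 56,57,60,61,62,63}"
  proof -
    have AS: "tri_at r4 45 = cpow 3 (red (c3 - m - 3)) (cpow 2 (red ((c2 - m - 3) - (c3 - m - 3))) (cpow 1 (red ((c1 - m - 3) - (c2 - m - 3))) (tri_at r3 45)))
      \<and> nn3 r4 45 \<and> keep r3 r4 {45, 45+1, 45+2, 56,57,60,61,62,63}"
      unfolding r4_def by (rule arm_spec) (use r3b P'(4-6) nn45(1) in simp_all)
    then show "tri_at r4 45 = cpow 3 (red (c3 - m - 3)) (cpow 2 (red ((c2 - m - 3) - (c3 - m - 3))) (cpow 1 (red ((c1 - m - 3) - (c2 - m - 3))) (0,0,0)))"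
     "nn3 r4 45" "keep r3 r4 {45, 46, 47, 56,57,60,61,62,63}" unfolding nn45(2) by simp_all
  qed
  have r4b: "r4 18 = r1 18" "r4 19 = r1 19" "r4 20 = r1 20" "r4 42 = r3 42" "r4 43 = r3 43" "r4 44 = r3 44"
    using keepD[OF A2'(3), of 18] keepD[OF A2'(3), of 19] keepD[OF A2'(3), of 20]
      keepD[OF A2'(3), of 42] keepD[OF A2'(3), of 43] keepD[OF A2'(3), of 44] r3b by auto
  have nn42: "nn3 r4 42" "tri_at r4 42 = tri_at r3 42" using A1'(2) r4b unfolding nn3_def tri_at_def by auto
  have C: "srun ?xs corec r4 70 = int (core (nat (r4 18)) (nat (r4 19)) (nat (r4 20)) (tri_at r4 42) (tri_at r4 45))"
    by (rule core_run[OF nn42(1) A2'(2)])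
  have "srun ?xs S2 r 0 = srun ?xs corec r4 70"
    unfolding S2_def r4_def r3_def r2_def r1_def by (simp only: srun_append srun.simps sexec.simps fun_upd_same)
  also have "\<dots> = int (core (e0 - m) (e1 - m) (e2 - m) (armW (e0 - m) (e1 - m) (e2 - m)) (armW (c1 - m) (c2 - m) (c3 - m)))"
    unfolding C r4b R1 nn42(2) A1'(1) A2'(1) nat_sub_int armW_cpow by (simp add: diff_diff_left)
  finally show ?thesis unfolding e0_e1_e2_def .
qed

definition Acode :: "instr list" where
  "Acode = [Mov 10 2, Const 50 3, Sub 51 10 50, Lt 52 9 51, Mul 11 51 52, Add 12 11 1, Const 50 2,
     Add 13 11 50, Const 50 3, Add 14 11 50]"

lemma clipd: "(int d - 3) * (if 0 < int d - 3 then 1 else 0) = int (d - 3)" by auto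

lemma A_spec:
  assumes "r 2 = int d" "r 9 = 0" "r 1 = 1"
  shows "srun xs Acode r 11 = int (d - 3) \<and> srun xs Acode r 12 = int (d - 3 + 1)
    \<and> srun xs Acode r 13 = int (d - 3 + 2) \<and> srun xs Acode r 14 = int (d - 3 + 3)
    \<and> keep r (srun xs Acode r) {10,11,12,13,14,50,51,52}"
  using assms by (simp add: Acode_def clipd keep_def)

definition prog :: "instr list" where
  "prog = [Const 1 1] @ rel 1 (bsc 9 True) @ Acode @ rel 27 (bsc 12 False) @ [Mov 15 2]
     @ rel 44 (bsc 13 False) @ [Mov 16 2] @ rel 61 (bsc 14 False) @ [Mov 17 2] @ S2"

lemma seg_mid: "seg (xs @ c @ ys) (length xs) c"
  unfolding seg_def by (simp add: nth_append)

lemma rel_simple: "list_all simple c \<Longrightarrow> rel b c = c"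
  unfolding rel_def by (induction c) (auto elim: simple.elims)

lemma len_bsc: "length (bsc t s) = 16" by (simp add: bsc_def)
lemma len_rel: "length (rel b c) = length c" by (simp add: rel_def)

lemma simple_S2: "list_all simple S2"
  by (simp add: S2_def readc_def prepc_def clipc_def redc_def armc_def condFs_def condF_def corec_def cellc_def)

lemma simple_A: "list_all simple Acode" by (simp add: Acode_def)

lemma segs:
  "seg prog 0 (rel 0 [Const 1 1])"
  "seg prog 1 (rel 1 (bsc 9 True))"
  "seg prog 17 (rel 17 Acode)"
  "seg prog 27 (rel 27 (bsc 12 False))"
  "seg prog 43 (rel 43 [Mov 15 2])"
  "seg prog 44 (rel 44 (bsc 13 False))"
  "seg prog 60 (rel 60 [Mov 16 2])"
  "seg prog 61 (rel 61 (bsc 14 False))"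
  "seg prog 77 (rel 77 [Mov 17 2])"
  "seg prog 78 (rel 78 S2)"
  "length prog = 78 + length S2"
proof -
  have l: "length Acode = 10" by (simp add: Acode_def)
  have r0: "rel b [Const 1 1] = [Const 1 1]" "rel b [Mov q 2] = [Mov q 2]" for b q by (simp_all add: rel_def)
  have rA: "rel 17 Acode = Acode" by (rule rel_simple[OF simple_A])
  have rS: "rel 78 S2 = S2" by (rule rel_simple[OF simple_S2])
  show "seg prog 0 (rel 0 [Const 1 1])" using seg_mid[of "[]" "[Const 1 1]"] unfolding prog_def r0 by simp
  show "seg prog 1 (rel 1 (bsc 9 True))" using seg_mid[of "[Const 1 1]" "rel 1 (bsc 9 True)"] unfolding prog_def by simp
  show "seg prog 17 (rel 17 Acode)" using seg_mid[of "[Const 1 1] @ rel 1 (bsc 9 True)" Acode] unfolding prog_def rA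
    by (simp add: len_rel len_bsc)
  show "seg prog 27 (rel 27 (bsc 12 False))" using seg_mid[of "[Const 1 1] @ rel 1 (bsc 9 True) @ Acode" "rel 27 (bsc 12 False)"]
    unfolding prog_def by (simp add: len_rel len_bsc l)
  show "seg prog 43 (rel 43 [Mov 15 2])" using seg_mid[of "[Const 1 1] @ rel 1 (bsc 9 True) @ Acode @ rel 27 (bsc 12 False)" "[Mov 15 2]"]
    unfolding prog_def r0 by (simp add: len_rel len_bsc l)
  show "seg prog 44 (rel 44 (bsc 13 False))" using seg_mid[of "[Const 1 1] @ rel 1 (bsc 9 True) @ Acode @ rel 27 (bsc 12 False) @ [Mov 15 2]" "rel 44 (bsc 13 False)"]
    unfolding prog_def by (simp add: len_rel len_bsc l)
  show "seg prog 60 (rel 60 [Mov 16 2])" using seg_mid[of "[Const 1 1] @ rel 1 (bsc 9 True) @ Acode @ rel 27 (bsc 12 False) @ [Mov 15 2] @ rel 44 (bsc 13 False)" "[Mov 16 2]"]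
    unfolding prog_def r0 by (simp add: len_rel len_bsc l)
  show "seg prog 61 (rel 61 (bsc 14 False))" using seg_mid[of "[Const 1 1] @ rel 1 (bsc 9 True) @ Acode @ rel 27 (bsc 12 False) @ [Mov 15 2] @ rel 44 (bsc 13 False) @ [Mov 16 2]" "rel 61 (bsc 14 False)"]
    unfolding prog_def by (simp add: len_rel len_bsc l)
  show "seg prog 77 (rel 77 [Mov 17 2])" using seg_mid[of "[Const 1 1] @ rel 1 (bsc 9 True) @ Acode @ rel 27 (bsc 12 False) @ [Mov 15 2] @ rel 44 (bsc 13 False) @ [Mov 16 2] @ rel 61 (bsc 14 False)" "[Mov 17 2]"]
    unfolding prog_def r0 by (simp add: len_rel len_bsc l)
  show "seg prog 78 (rel 78 S2)" using seg_mid[of "[Const 1 1] @ rel 1 (bsc 9 True) @ Acode @ rel 27 (bsc 12 False) @ [Mov 15 2] @ rel 44 (bsc 13 False) @ [Mov 16 2] @ rel 61 (bsc 14 False) @ [Mov 17 2]" S2 "[]"]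
    unfolding prog_def rS by (simp add: len_rel len_bsc l)
  show "length prog = 78 + length S2" unfolding prog_def by (simp add: len_rel len_bsc l)
qed

lemma chain: "(f ^^ a) s = s' \<Longrightarrow> (f ^^ b) s' = s'' \<Longrightarrow> (f ^^ (b + a)) s = s''"
  by (simp add: funpow_add)

lemma atp_eq: "atp b i = atp b' i' \<longleftrightarrow> b + i = b' + i'" unfolding atp_def by simp

lemma cnt_mono:
  fixes c1 c2 T1 T2 :: nat and e :: "nat \<Rightarrow> nat"
  assumes "\<And>i. i < c1 \<longleftrightarrow> T1 \<le> e i" "\<And>i. i < c2 \<longleftrightarrow> T2 \<le> e i" "T1 \<le> T2"
  shows "c2 \<le> c1"
proof (rule ccontr)
  assume "\<not> c2 \<le> c1"
  then have "c1 < c2" by simp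
  then have "T2 \<le> e c1" using assms(2) by blast
  then have "c1 < c1" using assms(1,3) by (meson order_trans)
  then show False by simp
qed

lemma run_main:
  assumes s: "sorted_wrt (\<ge>) lam" and pos: "\<forall>x\<in>set lam. 0 < x" and k: "Suc (length lam) \<le> 2 ^ k"
  shows "\<exists>T r'. T \<le> 34 + length S2 + 48 * k \<and> (step prog (map int lam) ^^ T) (init (map int lam)) = (78 + length S2, r')
     \<and> r' 0 = int (sg lam)"
proof -
  let ?xs = "map int lam"
  let ?f = "step prog ?xs"
  define r0 :: "nat \<Rightarrow> int" where "r0 = (\<lambda>_. 0)(0 := int (length lam))"
  have i0: "init ?xs = (atp 0 0, r0)" unfolding init_def r0_def atp_def by simp
  have st1: "(?f ^^ 1) (atp 0 0, r0) = (atp 1 0, r0(1 := 1))"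
    using run_straight[OF segs(1), of ?xs r0] by (simp add: rel_def atp_def)
  define ra where "ra = r0(1 := 1)"
  have ra: "ra 0 = int (length ?xs)" "ra 1 = 1" "ra 9 = 0" unfolding ra_def r0_def by simp_all
  obtain n1 rb d where B1: "n1 \<le> 12 * k + 5" "(?f ^^ n1) (atp 1 0, ra) = (atp 1 16, rb)" "rb 2 = int d"
    "bsP ?xs (ra 9) True d" "d = length ?xs \<or> \<not> bsP ?xs (ra 9) True (Suc d)" "\<forall>q. q \<notin> {2..8} \<longrightarrow> rb q = ra q"
    using bs_run[OF segs(2) _ ra(1) ra(2), of k] k by auto
  have rb: "rb 0 = int (length ?xs)" "rb 1 = 1" "rb 9 = 0" using B1(6) ra by auto
  define m where "m = d - 3"
  have dc: "\<And>i. i < d \<Longrightarrow> i < ent lam i" "\<not> d < ent lam d"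
    using d_char[OF s] B1(4,5) ra(3) by auto
  define rc where "rc = srun ?xs Acode rb"
  have st3: "(?f ^^ 10) (atp 17 0, rb) = (atp 17 10, rc)"
  proof -
    have lA: "length Acode = 10" by (simp add: Acode_def)
    show ?thesis using run_straight[OF segs(3) simple_A, of ?xs rb] unfolding rc_def lA .
  qed
  have AS: "rc 11 = int m" "rc 12 = int (m + 1)" "rc 13 = int (m + 2)" "rc 14 = int (m + 3)"
    "keep rb rc {10,11,12,13,14,50,51,52}"
    using A_spec[OF B1(3) rb(3) rb(2), of ?xs] unfolding rc_def m_def by auto
  have rc: "rc 0 = int (length ?xs)" "rc 1 = 1" "rc 9 = 0"
    using keepD[OF AS(5), of 0] keepD[OF AS(5), of 1] keepD[OF AS(5), of 9] rb by auto
  obtain n2 rd lo1 where B2: "n2 \<le> 12 * k + 5" "(?f ^^ n2) (atp 27 0, rc) = (atp 27 16, rd)" "rd 2 = int lo1"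
    "bsP ?xs (rc 12) False lo1" "lo1 = length ?xs \<or> \<not> bsP ?xs (rc 12) False (Suc lo1)" "\<forall>q. q \<notin> {2..8} \<longrightarrow> rd q = rc q"
    using bs_run[OF segs(4) _ rc(1) rc(2), of k] k by auto
  have c1: "\<And>i. i < lo1 \<longleftrightarrow> m + 1 \<le> ent lam i" using c_char[OF s, of "m+1" lo1] B2(4,5) AS(2) by auto
  define re where "re = rd(15 := rd 2)"
  have st5: "(?f ^^ 1) (atp 43 0, rd) = (atp 43 1, re)"
    using run_straight[OF segs(5), of ?xs rd] unfolding re_def by (simp add: rel_def)
  have re: "re 0 = int (length ?xs)" "re 1 = 1" "re 9 = 0" "re 11 = int m" "re 13 = int (m + 2)" "re 14 = int (m+3)"
    "re 15 = int lo1"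
    using B2(6) rc AS B2(3) unfolding re_def by auto
  obtain n3 rf lo2 where B3: "n3 \<le> 12 * k + 5" "(?f ^^ n3) (atp 44 0, re) = (atp 44 16, rf)" "rf 2 = int lo2"
    "bsP ?xs (re 13) False lo2" "lo2 = length ?xs \<or> \<not> bsP ?xs (re 13) False (Suc lo2)" "\<forall>q. q \<notin> {2..8} \<longrightarrow> rf q = re q"
    using bs_run[OF segs(6) _ re(1) re(2), of k] k by auto
  have c2: "\<And>i. i < lo2 \<longleftrightarrow> m + 2 \<le> ent lam i" using c_char[OF s, of "m+2" lo2] B3(4,5) re(5) by auto
  define rg where "rg = rf(16 := rf 2)"
  have st7: "(?f ^^ 1) (atp 60 0, rf) = (atp 60 1, rg)"
    using run_straight[OF segs(7), of ?xs rf] unfolding rg_def by (simp add: rel_def)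
  have rg: "rg 0 = int (length ?xs)" "rg 1 = 1" "rg 9 = 0" "rg 11 = int m" "rg 14 = int (m+3)"
    "rg 15 = int lo1" "rg 16 = int lo2"
    using B3(6) re B3(3) unfolding rg_def by auto
  obtain n4 rh lo3 where B4: "n4 \<le> 12 * k + 5" "(?f ^^ n4) (atp 61 0, rg) = (atp 61 16, rh)" "rh 2 = int lo3"
    "bsP ?xs (rg 14) False lo3" "lo3 = length ?xs \<or> \<not> bsP ?xs (rg 14) False (Suc lo3)" "\<forall>q. q \<notin> {2..8} \<longrightarrow> rh q = rg q"
    using bs_run[OF segs(8) _ rg(1) rg(2), of k] k by auto
  have c3: "\<And>i. i < lo3 \<longleftrightarrow> m + 3 \<le> ent lam i" using c_char[OF s, of "m+3" lo3] B4(4,5) rg(5) by auto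
  define ri where "ri = rh(17 := rh 2)"
  have st9: "(?f ^^ 1) (atp 77 0, rh) = (atp 77 1, ri)"
    using run_straight[OF segs(9), of ?xs rh] unfolding ri_def by (simp add: rel_def)
  have ri: "ri 1 = 1" "ri 9 = 0" "ri 11 = int m" "ri 15 = int lo1" "ri 16 = int lo2" "ri 17 = int lo3"
    using B4(6) rg B4(3) unfolding ri_def by auto
  have st10: "(?f ^^ length S2) (atp 78 0, ri) = (atp 78 (length S2), srun ?xs S2 ri)"
    using run_straight[OF segs(10) simple_S2] by simp
  have m21: "lo2 \<le> lo1" by (rule cnt_mono[OF c1 c2]) simp
  have m32: "lo3 \<le> lo2" by (rule cnt_mono[OF c2 c3]) simp
  have val: "srun ?xs S2 ri 0 = int (core (ent lam m - m) (ent lam (m+1) - m) (ent lam (m+2) - m)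
     (armW (ent lam m - m) (ent lam (m+1) - m) (ent lam (m+2) - m)) (armW (lo1 - m) (lo2 - m) (lo3 - m)))"
    by (rule S2_spec[OF ri(2) ri(1) ri(3-6) m21 m32 s])
  define cnt where "cnt k = (if k = 0 then lo1 else if k = 1 then lo2 else lo3)" for k :: nat
  have cP: "\<And>k i. k < 3 \<Longrightarrow> (i < cnt k \<longleftrightarrow> m + k + 1 \<le> ent lam i)"
  proof -
    fix k i :: nat assume "k < 3"
    then have "k = 0 \<or> k = 1 \<or> k = 2" by auto
    then show "i < cnt k \<longleftrightarrow> m + k + 1 \<le> ent lam i" unfolding cnt_def using c1 c2 c3 by auto
  qed
  have sgv: "sg lam = core (ent lam m - m) (ent lam (m+1) - m) (ent lam (m+2) - m)
     (armW (ent lam m - m) (ent lam (m+1) - m) (ent lam (m+2) - m)) (armW (cnt 0 - m) (cnt 1 - m) (cnt 2 - m))"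
    by (rule main_math[OF s pos dc(1) dc(2) m_def cP])
  have val2: "srun ?xs S2 ri 0 = int (sg lam)" unfolding val sgv cnt_def by simp
  have e1: "atp 0 1 = atp 1 0" "atp 1 16 = atp 17 0" "atp 17 10 = atp 27 0" "atp 27 16 = atp 43 0"
    "atp 43 1 = atp 44 0" "atp 44 16 = atp 60 0" "atp 60 1 = atp 61 0" "atp 61 16 = atp 77 0" "atp 77 1 = atp 78 0"
    unfolding atp_def by simp_all
  have st1': "(?f ^^ 1) (atp 0 0, r0) = (atp 1 0, ra)" using st1 unfolding ra_def .
  have "(?f ^^ (length S2 + (1 + (n4 + (1 + (n3 + (1 + (n2 + (10 + (n1 + 1)))))))))) (atp 0 0, r0)
     = (atp 78 (length S2), srun ?xs S2 ri)"
    by (rule chain[OF chain[OF chain[OF chain[OF chain[OF chain[OF chain[OF chain[OF chain[OF st1' B1(2)] st3[folded e1(2)]]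
       B2(2)[folded e1(3)]] st5[folded e1(4)]] B3(2)[folded e1(5)]] st7[folded e1(6)]] B4(2)[folded e1(7)]]
       st9[folded e1(8)]] st10[folded e1(9)]])
  moreover have "atp 78 (length S2) = 78 + length S2" unfolding atp_def by simp
  moreover have "length S2 + (1 + (n4 + (1 + (n3 + (1 + (n2 + (10 + (n1 + 1)))))))) \<le> 34 + length S2 + 48 * k"
    using B1(1) B2(1) B3(1) B4(1) by simp
  ultimately show ?thesis using i0 val2 by (intro exI[of _ "length S2 + (1 + (n4 + (1 + (n3 + (1 + (n2 + (10 + (n1 + 1))))))))"]) auto
qed

lemma len_le_sum: "\<forall>x\<in>set l. 0 < (x::nat) \<Longrightarrow> length l \<le> sum_list l"
  by (induction l) auto

lemma k_exists:
  assumes N: "1 \<le> N"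
  shows "\<exists>k. Suc N \<le> 2 ^ k \<and> real k \<le> 1 + log 2 (real N)"
proof -
  define k where "k = (LEAST k. N < 2 ^ k)"
  have ex: "N < 2 ^ N" by (rule less_exp)
  have k1: "N < 2 ^ k" unfolding k_def by (rule LeastI[of _ N]) (rule ex)
  have k0: "k \<noteq> 0" using k1 N by (cases k) auto
  have "\<not> N < 2 ^ (k - 1)" unfolding k_def by (rule not_less_Least) (use k0 in \<open>simp add: k_def\<close>)
  then have "2 ^ (k - 1) \<le> N" by simp
  then have "(2::real) ^ (k - 1) \<le> real N" by (metis of_nat_le_iff of_nat_numeral of_nat_power)
  then have "log 2 ((2::real) ^ (k - 1)) \<le> log 2 (real N)" using N by (subst log_le_cancel_iff) auto
  then have "real (k - 1) \<le> log 2 (real N)" by simp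
  then have "real k \<le> 1 + log 2 (real N)" using k0 by (simp add: of_nat_diff)
  then show ?thesis using k1 by (intro exI[of _ k]) simp
qed

theorem mainTheorem15:
  "\<exists>(p :: instr list) (C :: real). \<forall>(n :: nat) (lam :: nat list).
     1 \<le> n \<and> is_partition n lam \<longrightarrow>
     (\<exists>T. runs_within p (map int lam) T (int (sg lam)) \<and>
          real T \<le> C * (1 + log 2 (real (length lam))) \<and>
          real T \<le> C * (1 + log 2 (real n)))"
proof (intro exI[of _ prog] exI[of _ "82 + real (length S2)"] allI impI)
  fix n :: nat and lam :: "nat list"
  assume a: "1 \<le> n \<and> is_partition n lam"
  have s: "sorted_wrt (\<ge>) lam" and pos: "\<forall>x\<in>set lam. 0 < x" and sm: "sum_list lam = n"
    using a unfolding is_partition_def by auto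
  have Nn: "length lam \<le> n" using len_le_sum[OF pos] sm by simp
  have N1: "1 \<le> length lam" using a sm by (cases lam) auto
  obtain k where k: "Suc (length lam) \<le> 2 ^ k" "real k \<le> 1 + log 2 (real (length lam))"
    using k_exists[OF N1] by blast
  obtain T r' where R: "T \<le> 34 + length S2 + 48 * k"
    "(step prog (map int lam) ^^ T) (init (map int lam)) = (78 + length S2, r')" "r' 0 = int (sg lam)"
    using run_main[OF s pos k(1)] by blast
  have "runs_within prog (map int lam) T (int (sg lam))"
    unfolding runs_within_def halted_def using R(2,3) segs(11) by (intro exI[of _ T]) simp
  moreover
  let ?C = "82 + real (length S2)"
  have "log 2 1 \<le> log 2 (real (length lam))" using N1 by (subst log_le_cancel_iff) auto
  then have lg0: "0 \<le> log 2 (real (length lam))" by simp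
  have b1: "real T \<le> ?C * (1 + log 2 (real (length lam)))"
  proof -
    have "real T \<le> 34 + real (length S2) + 48 * real k" using R(1) by linarith
    also have "\<dots> \<le> 34 + real (length S2) + 48 * (1 + log 2 (real (length lam)))" using k(2) by simp
    also have "\<dots> \<le> ?C * (1 + log 2 (real (length lam)))"
      using lg0 by (simp add: algebra_simps)
    finally show ?thesis .
  qed
  moreover have "real T \<le> ?C * (1 + log 2 (real n))"
  proof -
    have "log 2 (real (length lam)) \<le> log 2 (real n)" using Nn N1 by (subst log_le_cancel_iff) auto
    then have "?C * (1 + log 2 (real (length lam))) \<le> ?C * (1 + log 2 (real n))"
      by (intro mult_left_mono) auto
    then show ?thesis using b1 by linarith
  qed
  ultimately show "\<exists>T. runs_within prog (map int lam) T (int (sg lam)) \<and>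
          real T \<le> ?C * (1 + log 2 (real (length lam))) \<and>
          real T \<le> ?C * (1 + log 2 (real n))" by blast
qed

end
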